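(* Let $Q_{R,d}$ and $Q_R$ be formal Laurent series in $\mathbb{Q}((x))$, for all data $R$ and all $d\in\mathbb{Z}$, satisfying for every $R$ and $d$ $$Q_R(x)=\sum_{r\ge1}\sum_{I:\ \ell(I)=r}\ \sum_{(d_1,\dots,d_r)}x^{N_R(I;d_1,\dots,d_r)}\prod_{k=1}^rQ_{R^I_k,d_k}(x),$$ with $(d_1,\dots,d_r)\in\mathbb{Z}^r$, $\sum d_i=d$, $\frac{d_1+\alpha(R^I_1)}{n(R^I_1)}>\dots>\frac{d_r+\alpha(R^I_r)}{n(R^I_r)}$. For a real $\lambda$ put $$Q^\lambda_{R,d}(x)=\sum_{r\ge1}\sum_{I:\ \ell(I)=r}\ \sum_{(d_1,\dots,d_r)}^{(\lambda)}x^{N_R(I;d_1,\dots,d_r)}\prod_{k=1}^rQ_{R^I_k,d_k}(x),$$ where the inner sum is over $(d_1,\dots,d_r)\in\mathbb{Z}^r$ with $\sum d_i=d$ and $\lambda\ge\frac{d_1+\alpha(R^I_1)}{n(R^I_1)}>\frac{d_2+\alpha(R^I_2)}{n(R^I_2)}>\dots>\frac{d_r+\alpha(R^I_r)}{n(R^I_r)}$, and $$S^\lambda_{R,d}(x)=\sum_{r\ge1}\sum_{I:\ \ell(I)=r}\frac{x^{M'_R(I;d)+M_R(I;\lambda)}}{(x^{n(R^I_1)+n(R^I_2)}-1)\cdots(x^{n(R^I_{r-1})+n(R^I_r)}-1)}\prod_{k=1}^rQ_{R^I_k}(x).$$ Then $Q^\lambda_{R,d}=S^\lambda_{R,d}$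 for every data $R$, every $d\in\mathbb{Z}$ and every real $\lambda\ge(d+\alpha(R))/n(R)$.
   Context: Fix a finite set $S$, integers $m_P\ge1$ ($P\in S$) and reals $0\le\alpha^P_1<\dots<\alpha^P_{m_P}<1$. A data $R=(R^P_i)$ is a family of non-negative integers with $n(R)=\sum_iR^P_i$ positive and independent of $P$; $\alpha(R)=\sum_P\sum_iR^P_i\alpha^P_i$. A partition of $R$ of length $r=\ell(I)$ is a family of non-negative integers $I^P_{i,k}$, $1\le k\le r$, with $\sum_kI^P_{i,k}=R^P_i$, $\sum_iI^P_{i,k}$ independent of $P$, and for each $k$ some $I^P_{i,k}\ne0$; $(R^I_k)^P_i=I^P_{i,k}$, $(R^I_{\le k})^P_i=\sum_{k'\le k}I^P_{i,k'}$. Define $\sigma_R(I)=\sum_{P\in S}\sum_{k>l,\ i>t}I^P_{i,k}I^P_{t,l}$, $N_R(I;d_1,\dots,d_r)=\sum_{k>l}(d_ln(R^I_k)-d_kn(R^I_l))-\sigma_R(I)$, $M'_R(I;d)=-(n(R)-n(R^I_r))d-\sigma_R(I)+(2n(R)-n(R^I_1)-n(R^I_r))$, and $M_R(I;\lambda)=\sum_{k=1}^{r-1}(n(R^I_k)+n(R^I_{k+1}))[n(R^I_{\le k})\lambda-\alpha(R^I_{\le k})]$, with $[y]$ the integer part. Factors $1/(x^a-1)$ are expanded in $\mathbb{Q}((x))$. *)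

theory Defs
  imports "HOL-Analysis.Infinite_Sum" "HOL-Computational_Algebra.Formal_Laurent_Series"
begin

text \<open>Points P range over a finite set S of type 'p; a datum R is the function
  P, i \<mapsto> R^P_i (for P in S, 1 \<le> i \<le> m P), normalised to be 0 outside that domain.\<close>

type_synonym 'p data = "'p \<Rightarrow> nat \<Rightarrow> nat"

definition is_data :: "'p set \<Rightarrow> ('p \<Rightarrow> nat) \<Rightarrow> 'p data \<Rightarrow> bool" where
  "is_data S m R \<longleftrightarrow>
     (\<forall>P i. (P \<notin> S \<or> i < 1 \<or> m P < i) \<longrightarrow> R P i = 0) \<and>
     (\<exists>n>0. \<forall>P\<in>S. (\<Sum>i=1..m P. R P i) = n)"

text \<open>n(R) (evaluated at some point of S; independent of the point for data)\<close>
definition dn :: "'p set \<Rightarrow> ('p \<Rightarrow> nat) \<Rightarrow> 'p data \<Rightarrow> nat" where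
  "dn S m R = (\<Sum>i=1..m (SOME P. P \<in> S). R (SOME P. P \<in> S) i)"

definition dalpha :: "'p set \<Rightarrow> ('p \<Rightarrow> nat) \<Rightarrow> ('p \<Rightarrow> nat \<Rightarrow> real) \<Rightarrow> 'p data \<Rightarrow> real" where
  "dalpha S m \<alpha> R = (\<Sum>P\<in>S. \<Sum>i=1..m P. real (R P i) * \<alpha> P i)"

text \<open>A partition I of R of length r is encoded as the list [R^I_1, ..., R^I_r]
  (0-based list index k-1 for the paper's index k).\<close>
definition is_partition :: "'p set \<Rightarrow> ('p \<Rightarrow> nat) \<Rightarrow> 'p data \<Rightarrow> 'p data list \<Rightarrow> bool" where
  "is_partition S m R Is \<longleftrightarrow>
     Is \<noteq> [] \<and> (\<forall>Rk\<in>set Is. is_data S m Rk) \<and>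
     (\<forall>P i. R P i = (\<Sum>k<length Is. (Is ! k) P i))"

definition prefix_data :: "'p data list \<Rightarrow> nat \<Rightarrow> 'p data" where
  "prefix_data Is k = (\<lambda>P i. \<Sum>j<k. (Is ! j) P i)"

definition sigma :: "'p set \<Rightarrow> ('p \<Rightarrow> nat) \<Rightarrow> 'p data list \<Rightarrow> int" where
  "sigma S m Is = (\<Sum>P\<in>S. \<Sum>k<length Is. \<Sum>l<k. \<Sum>i\<in>{1..m P}. \<Sum>t\<in>{1..<i}.
       int ((Is ! k) P i) * int ((Is ! l) P t))"

definition Nexp :: "'p set \<Rightarrow> ('p \<Rightarrow> nat) \<Rightarrow> 'p data list \<Rightarrow> int list \<Rightarrow> int" where
  "Nexp S m Is ds =
     (\<Sum>k<length Is. \<Sum>l<k. ds ! l * int (dn S m (Is ! k)) - ds ! k * int (dn S m (Is ! l)))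
     - sigma S m Is"

definition M'exp :: "'p set \<Rightarrow> ('p \<Rightarrow> nat) \<Rightarrow> 'p data \<Rightarrow> 'p data list \<Rightarrow> int \<Rightarrow> int" where
  "M'exp S m R Is d =
     - (int (dn S m R) - int (dn S m (last Is))) * d - sigma S m Is
     + (2 * int (dn S m R) - int (dn S m (hd Is)) - int (dn S m (last Is)))"

definition Mexp :: "'p set \<Rightarrow> ('p \<Rightarrow> nat) \<Rightarrow> ('p \<Rightarrow> nat \<Rightarrow> real) \<Rightarrow> 'p data list \<Rightarrow> real \<Rightarrow> int" where
  "Mexp S m \<alpha> Is lam =
     (\<Sum>k\<in>{1..<length Is}. int (dn S m (Is ! (k - 1)) + dn S m (Is ! k)) *
        \<lfloor>real (dn S m (prefix_data Is k)) * lam - dalpha S m \<alpha> (prefix_data Is k)\<rfloor>)"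

definition slope :: "'p set \<Rightarrow> ('p \<Rightarrow> nat) \<Rightarrow> ('p \<Rightarrow> nat \<Rightarrow> real) \<Rightarrow> 'p data \<Rightarrow> int \<Rightarrow> real" where
  "slope S m \<alpha> R d = (real_of_int d + dalpha S m \<alpha> R) / real (dn S m R)"

definition Dset :: "'p set \<Rightarrow> ('p \<Rightarrow> nat) \<Rightarrow> ('p \<Rightarrow> nat \<Rightarrow> real) \<Rightarrow> 'p data \<Rightarrow> int
                    \<Rightarrow> ('p data list \<times> int list) set" where
  "Dset S m \<alpha> R d = {(Is, ds). is_partition S m R Is \<and> length ds = length Is \<and> sum_list ds = d \<and>
      (\<forall>k. Suc k < length Is \<longrightarrow>
         slope S m \<alpha> (Is ! k) (ds ! k) > slope S m \<alpha> (Is ! Suc k) (ds ! Suc k))}"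

definition qterm :: "'p set \<Rightarrow> ('p \<Rightarrow> nat) \<Rightarrow> ('p data \<Rightarrow> int \<Rightarrow> rat fls)
                    \<Rightarrow> 'p data list \<Rightarrow> int list \<Rightarrow> rat fls" where
  "qterm S m Q Is ds = fls_X_intpow (Nexp S m Is ds) * (\<Prod>k<length Is. Q (Is ! k) (ds ! k))"

definition Slam :: "'p set \<Rightarrow> ('p \<Rightarrow> nat) \<Rightarrow> ('p \<Rightarrow> nat \<Rightarrow> real) \<Rightarrow> ('p data \<Rightarrow> rat fls)
                    \<Rightarrow> 'p data \<Rightarrow> int \<Rightarrow> real \<Rightarrow> rat fls" where
  "Slam S m \<alpha> Q R d lam =
     (\<Sum>Is\<in>{Is. is_partition S m R Is}.
        fls_X_intpow (M'exp S m R Is d + Mexp S m \<alpha> Is lam) *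
        (\<Prod>k\<in>{1..<length Is}. inverse (fls_X ^ (dn S m (Is ! (k - 1)) + dn S m (Is ! k)) - 1)) *
        (\<Prod>k<length Is. Q (Is ! k)))"

end

theory Submission
  imports Defs
begin

definition lsum :: "'p data list \<Rightarrow> 'p data" where
  "lsum Is = (\<lambda>P i. sum_list (map (\<lambda>X. X P i) Is))"

definition addd :: "'p data \<Rightarrow> 'p data \<Rightarrow> 'p data" where
  "addd X Y = (\<lambda>P i. X P i + Y P i)"

definition diffd :: "'p data \<Rightarrow> 'p data \<Rightarrow> 'p data" where
  "diffd X Y = (\<lambda>P i. X P i - Y P i)"

lemma lsum_Nil[simp]: "lsum [] = (\<lambda>P i. 0)" by (simp add: lsum_def)
lemma lsum_Cons[simp]: "lsum (X # Is) = addd X (lsum Is)"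
  by (simp add: lsum_def addd_def)
lemma addd_0[simp]: "addd X (\<lambda>P i. 0) = X" by (simp add: addd_def)
lemma lsum_append: "lsum (I1 @ I2) = addd (lsum I1) (lsum I2)"
  by (simp add: lsum_def addd_def)
lemma lsum_single[simp]: "lsum [X] = X" by (simp add: lsum_def)

lemma addd_diffd: "(\<forall>P i. Y P i \<le> X P i) \<Longrightarrow> addd Y (diffd X Y) = X"
  by (auto simp: addd_def diffd_def fun_eq_iff)
lemma diffd_addd[simp]: "diffd (addd X Y) X = Y"
  by (auto simp: addd_def diffd_def fun_eq_iff)

lemma prefix_data_take: "prefix_data Is k = lsum (take k Is)" if "k \<le> length Is"
  using that
proof (induction k)
  case 0 then show ?case by (simp add: prefix_data_def fun_eq_iff)
next
  case (Suc k)
  have "take (Suc k) Is = take k Is @ [Is ! k]" using Suc.prems by (simp add: take_Suc_conv_app_nth)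
  then show ?case using Suc by (simp add: prefix_data_def lsum_append addd_def fun_eq_iff)
qed

definition sig2 :: "'p set \<Rightarrow> ('p \<Rightarrow> nat) \<Rightarrow> 'p data \<Rightarrow> 'p data \<Rightarrow> int" where
  "sig2 S m X Y = (\<Sum>P\<in>S. \<Sum>i\<in>{1..m P}. \<Sum>t\<in>{1..<i}. int (Y P i) * int (X P t))"

definition fl :: "'p set \<Rightarrow> ('p \<Rightarrow> nat) \<Rightarrow> ('p \<Rightarrow> nat \<Rightarrow> real) \<Rightarrow> real \<Rightarrow> 'p data \<Rightarrow> int" where
  "fl S m \<alpha> lam X = \<lfloor>real (dn S m X) * lam - dalpha S m \<alpha> X\<rfloor>"
definition lf :: "'p set \<Rightarrow> ('p \<Rightarrow> nat) \<Rightarrow> ('p \<Rightarrow> nat \<Rightarrow> real) \<Rightarrow> real \<Rightarrow> 'p data \<Rightarrow> int" where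
  "lf S m \<alpha> lam X = \<lceil>real (dn S m X) * lam - dalpha S m \<alpha> X\<rceil> - 1"

locale SM =
  fixes S :: "'p set" and m :: "'p \<Rightarrow> nat" and \<alpha> :: "'p \<Rightarrow> nat \<Rightarrow> real"
  assumes finS: "finite S" and neS: "S \<noteq> {}"
begin

abbreviation "nn \<equiv> dn S m"
abbreviation "al \<equiv> dalpha S m \<alpha>"
abbreviation "mu \<equiv> slope S m \<alpha>"
abbreviation "dat \<equiv> is_data S m"
abbreviation "part \<equiv> is_partition S m"

definition subd :: "'p data \<Rightarrow> 'p data set" where
  "subd R = {X. dat X \<and> (\<forall>P i. X P i \<le> R P i)}"

definition Parts :: "'p data \<Rightarrow> 'p data list set" where
  "Parts R = {Is. part R Is}"

lemma nn_add: "nn (addd X Y) = nn X + nn Y"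
  by (simp add: dn_def addd_def sum.distrib)
lemma al_add: "al (addd X Y) = al X + al Y"
  by (simp add: dalpha_def addd_def sum.distrib algebra_simps)
lemma nn_zero[simp]: "nn (\<lambda>P i. 0) = 0" by (simp add: dn_def)
lemma al_zero[simp]: "al (\<lambda>P i. 0) = 0" by (simp add: dalpha_def)
lemma nn_lsum: "nn (lsum Is) = sum_list (map nn Is)"
  by (induction Is) (simp_all add: nn_add)
lemma al_lsum: "al (lsum Is) = sum_list (map al Is)"
  by (induction Is) (simp_all add: al_add)
lemma sig2_add1: "sig2 S m (addd X Y) Z = sig2 S m X Z + sig2 S m Y Z"
  by (simp add: sig2_def addd_def sum.distrib algebra_simps)
lemma sig2_zero1[simp]: "sig2 S m (\<lambda>P i. 0) Z = 0"
  by (simp add: sig2_def)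

lemma someS: "(SOME P. P \<in> S) \<in> S"
  using neS by (meson ex_in_conv someI_ex)

lemma dat_sum: "dat X \<Longrightarrow> P \<in> S \<Longrightarrow> (\<Sum>i=1..m P. X P i) = nn X"
  unfolding is_data_def dn_def using someS by metis

lemma dat_pos: "dat X \<Longrightarrow> 0 < nn X"
  unfolding is_data_def dn_def using someS by metis

lemma dat_add: "dat X \<Longrightarrow> dat Y \<Longrightarrow> dat (addd X Y)"
  unfolding is_data_def addd_def
  by (auto simp: sum.distrib)

lemma dat_lsum: "Is \<noteq> [] \<Longrightarrow> \<forall>X\<in>set Is. dat X \<Longrightarrow> dat (lsum Is)"
proof (induction Is)
  case Nil then show ?case by simp
next
  case (Cons X Is)
  then show ?case by (cases "Is = []") (auto intro: dat_add)
qed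

lemma part_iff: "part R Is \<longleftrightarrow> Is \<noteq> [] \<and> (\<forall>X\<in>set Is. dat X) \<and> R = lsum Is"
  unfolding is_partition_def lsum_def
  by (auto simp: fun_eq_iff sum_list_sum_nth atLeast0LessThan)

lemma part_dat: "part R Is \<Longrightarrow> dat R"
  using part_iff dat_lsum by metis

lemma le_lsum: "X \<in> set Is \<Longrightarrow> X P i \<le> lsum Is P i"
  unfolding lsum_def by (simp add: member_le_sum_list)

lemma length_le_sum: "(\<forall>x\<in>set xs. (1::nat) \<le> f x) \<Longrightarrow> length xs \<le> sum_list (map f xs)"
  by (induction xs) auto

lemma finite_subd: "finite (subd R)"
proof -
  define D where "D = {(P, i). P \<in> S \<and> 1 \<le> i \<and> i \<le> m P}"
  define K where "K = Max ((\<lambda>(P,i). R P i) ` D)"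
  have finD: "finite D"
  proof -
    have "D \<subseteq> (SIGMA P:S. {1..m P})" by (auto simp: D_def)
    then show ?thesis using finS finite_subset by blast
  qed
  have "(\<lambda>X. (\<lambda>(P,i). X P i)) ` subd R \<subseteq>
        {f. \<forall>x. (x \<in> D \<longrightarrow> f x \<in> {0..K}) \<and> (x \<notin> D \<longrightarrow> f x = 0)}"
  proof (clarsimp simp: subd_def)
    fix X :: "'p data" and a b
    assume X: "dat X" "\<forall>P i. X P i \<le> R P i"
    show "((a, b) \<in> D \<longrightarrow> X a b \<le> K) \<and> ((a, b) \<notin> D \<longrightarrow> X a b = 0)"
    proof (intro conjI impI)
      assume "(a, b) \<in> D"
      then have "R a b \<le> K" unfolding K_def using finD by (auto intro!: Max_ge)
      then show "X a b \<le> K" using X(2) le_trans by blast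
    next
      assume "(a, b) \<notin> D"
      then show "X a b = 0" using X(1) unfolding is_data_def D_def by auto
    qed
  qed
  moreover have "finite {f. \<forall>x. (x \<in> D \<longrightarrow> f x \<in> {0..K}) \<and> (x \<notin> D \<longrightarrow> f x = (0::nat))}"
    by (rule finite_set_of_finite_funs) (use finD in auto)
  moreover have "inj_on (\<lambda>X. (\<lambda>(P,i). X P i)) (subd R)"
  proof (rule inj_onI)
    fix X Y :: "'p data" assume h: "(\<lambda>(P,i). X P i) = (\<lambda>(P,i). Y P i)"
    show "X = Y"
    proof (intro ext)
      fix P i show "X P i = Y P i" using fun_cong[OF h, of "(P,i)"] by simp
    qed
  qed
  ultimately show ?thesis
    by (meson finite_imageD finite_subset)
qed

lemma part_subd: "part R Is \<Longrightarrow> X \<in> set Is \<Longrightarrow> X \<in> subd R"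
proof -
  assume p: "part R Is" and x: "X \<in> set Is"
  from p have "R = lsum Is" "\<forall>X\<in>set Is. dat X" by (simp_all add: part_iff)
  then show ?thesis using x le_lsum unfolding subd_def by auto
qed

lemma part_length: "part R Is \<Longrightarrow> length Is \<le> nn R"
proof -
  assume p: "part R Is"
  then have "\<forall>X\<in>set Is. 1 \<le> nn X" using part_iff dat_pos by (metis One_nat_def Suc_leI)
  then have "length Is \<le> sum_list (map nn Is)" by (rule length_le_sum)
  then show ?thesis using p part_iff nn_lsum by metis
qed

lemma finite_Parts: "finite (Parts R)"
proof -
  have "Parts R \<subseteq> {xs. set xs \<subseteq> subd R \<and> length xs \<le> nn R}"
    unfolding Parts_def using part_subd part_length by blast
  then show ?thesis using finite_lists_length_le[OF finite_subd] finite_subset by blast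
qed

lemma subd_trans: "X \<in> subd Y \<Longrightarrow> Y \<in> subd R \<Longrightarrow> X \<in> subd R"
  unfolding subd_def using le_trans by blast

lemma R_subd: "dat R \<Longrightarrow> R \<in> subd R" by (simp add: subd_def)

end

lemma sum_list_map_nth: "sum_list (map f xs) = (\<Sum>k<length xs. f (xs!k))"
  by (induction xs) (simp_all add: sum.lessThan_Suc_shift del: sum.lessThan_Suc)
lemma prod_list_map_nth: "prod_list (map f xs) = (\<Prod>k<length xs. f (xs!k))"
  by (induction xs) (simp_all add: prod.lessThan_Suc_shift del: prod.lessThan_Suc)

context SM begin

lemma lsum_nth: "lsum Is P i = (\<Sum>k<length Is. (Is!k) P i)"
  by (simp add: lsum_def sum_list_map_nth)

lemma sigma_Cons: "sigma S m (X # Is) = sigma S m Is + sig2 S m X (lsum Is)"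
proof -
  define r where "r = length Is"
  define G where "G = (\<lambda>P k l. \<Sum>i\<in>{1..m P}. \<Sum>t\<in>{1..<i}. int (((X#Is) ! k) P i) * int (((X#Is) ! l) P t))"
  define H where "H = (\<lambda>P k l. \<Sum>i\<in>{1..m P}. \<Sum>t\<in>{1..<i}. int ((Is ! k) P i) * int ((Is ! l) P t))"
  have step: "(\<Sum>k<Suc r. \<Sum>l<k. G P k l) = (\<Sum>k<r. \<Sum>l<k. H P k l) +
      (\<Sum>i\<in>{1..m P}. \<Sum>t\<in>{1..<i}. int (lsum Is P i) * int (X P t))" for P
  proof -
    have "(\<Sum>k<Suc r. \<Sum>l<k. G P k l) = (\<Sum>k<r. G P (Suc k) 0 + (\<Sum>l<k. G P (Suc k) (Suc l)))"
      by (simp add: sum.lessThan_Suc_shift del: sum.lessThan_Suc)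
    also have "\<dots> = (\<Sum>k<r. G P (Suc k) 0) + (\<Sum>k<r. \<Sum>l<k. H P k l)"
      by (simp add: sum.distrib G_def H_def)
    also have "(\<Sum>k<r. G P (Suc k) 0) =
        (\<Sum>k<r. \<Sum>i\<in>{1..m P}. \<Sum>t\<in>{1..<i}. int ((Is ! k) P i) * int (X P t))"
      by (simp add: G_def)
    also have "\<dots> = (\<Sum>i\<in>{1..m P}. \<Sum>k<r. \<Sum>t\<in>{1..<i}. int ((Is ! k) P i) * int (X P t))"
      by (rule sum.swap)
    also have "\<dots> = (\<Sum>i\<in>{1..m P}. \<Sum>t\<in>{1..<i}. \<Sum>k<r. int ((Is ! k) P i) * int (X P t))"
      by (rule sum.cong[OF refl], rule sum.swap)
    also have "\<dots> = (\<Sum>i\<in>{1..m P}. \<Sum>t\<in>{1..<i}. int (lsum Is P i) * int (X P t))"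
      by (simp add: lsum_nth r_def sum_distrib_right of_nat_sum)
    finally show ?thesis by simp
  qed
  have "sigma S m (X # Is) = (\<Sum>P\<in>S. \<Sum>k<Suc r. \<Sum>l<k. G P k l)"
    by (simp add: sigma_def G_def r_def)
  also have "\<dots> = (\<Sum>P\<in>S. (\<Sum>k<r. \<Sum>l<k. H P k l) +
      (\<Sum>i\<in>{1..m P}. \<Sum>t\<in>{1..<i}. int (lsum Is P i) * int (X P t)))"
    using step by simp
  also have "\<dots> = sigma S m Is + sig2 S m X (lsum Is)"
    by (simp add: sum.distrib sigma_def sig2_def H_def r_def)
  finally show ?thesis .
qed

lemma sig2_add2: "sig2 S m Z (addd X Y) = sig2 S m Z X + sig2 S m Z Y"
  by (simp add: sig2_def addd_def sum.distrib algebra_simps)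

lemma sigma_Nil[simp]: "sigma S m [] = 0" by (simp add: sigma_def)
lemma sigma_single[simp]: "sigma S m [X] = 0" by (simp add: sigma_def)

lemma sigma_append: "sigma S m (I1 @ I2) = sigma S m I1 + sigma S m I2 + sig2 S m (lsum I1) (lsum I2)"
  by (induction I1) (simp_all add: sigma_Cons lsum_append sig2_add1 sig2_add2)

lemma Nexp_Cons:
  assumes "length ds = length Is"
  shows "Nexp S m (X # Is) (e # ds) = Nexp S m Is ds + e * int (nn (lsum Is))
           - sum_list ds * int (nn X) - sig2 S m X (lsum Is)"
proof -
  define r where "r = length Is"
  define G where "G = (\<lambda>k l. (e#ds) ! l * int (nn ((X#Is) ! k)) - (e#ds) ! k * int (nn ((X#Is) ! l)))"
  define H where "H = (\<lambda>k l. ds ! l * int (nn (Is ! k)) - ds ! k * int (nn (Is ! l)))"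
  have "(\<Sum>k<Suc r. \<Sum>l<k. G k l) = (\<Sum>k<r. G (Suc k) 0 + (\<Sum>l<k. G (Suc k) (Suc l)))"
    by (simp add: sum.lessThan_Suc_shift del: sum.lessThan_Suc)
  also have "\<dots> = (\<Sum>k<r. G (Suc k) 0) + (\<Sum>k<r. \<Sum>l<k. H k l)"
    by (simp add: sum.distrib G_def H_def)
  also have "(\<Sum>k<r. G (Suc k) 0) = e * (\<Sum>k<r. int (nn (Is ! k))) - (\<Sum>k<r. ds ! k) * int (nn X)"
    by (simp add: G_def sum_subtractf sum_distrib_left sum_distrib_right)
  also have "(\<Sum>k<r. int (nn (Is ! k))) = int (nn (lsum Is))"
    by (simp add: nn_lsum sum_list_map_nth r_def)
  also have "(\<Sum>k<r. ds ! k) = sum_list ds"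
    by (simp add: sum_list_sum_nth atLeast0LessThan r_def assms)
  finally have eq: "(\<Sum>k<Suc r. \<Sum>l<k. G k l) = e * int (nn (lsum Is)) - sum_list ds * int (nn X) + (\<Sum>k<r. \<Sum>l<k. H k l)" .
  show ?thesis
    unfolding Nexp_def sigma_Cons
    using eq by (simp add: G_def H_def r_def)
qed

lemma qterm_Cons:
  assumes "length ds = length Is"
  shows "qterm S m Qd (X # Is) (e # ds) =
     fls_X_intpow (e * int (nn (lsum Is)) - sum_list ds * int (nn X) - sig2 S m X (lsum Is))
       * Qd X e * qterm S m Qd Is ds"
proof -
  have "qterm S m Qd (X # Is) (e # ds) =
      fls_X_intpow (Nexp S m Is ds + (e * int (nn (lsum Is)) - sum_list ds * int (nn X) - sig2 S m X (lsum Is)))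
      * (Qd X e * (\<Prod>k<length Is. Qd (Is ! k) (ds ! k)))"
    unfolding qterm_def Nexp_Cons[OF assms] by (simp add: prod.lessThan_Suc_shift algebra_simps del: prod.lessThan_Suc)
  also have "\<dots> = fls_X_intpow (e * int (nn (lsum Is)) - sum_list ds * int (nn X) - sig2 S m X (lsum Is))
       * Qd X e * qterm S m Qd Is ds"
    unfolding qterm_def
    by (simp only: fls_X_intpow_times_fls_X_intpow[symmetric] ac_simps)
  finally show ?thesis .
qed

lemma qterm_single: "qterm S m Qd [X] [e] = Qd X e"
  by (simp add: qterm_def Nexp_def)

end

lemma all_nat_split: "(\<forall>k::nat. P k) \<longleftrightarrow> P 0 \<and> (\<forall>k. P (Suc k))"
  by (metis nat.exhaust)

lemma dec_chain:
  assumes "\<forall>k. Suc k < r \<longrightarrow> (f (Suc k) :: real) < f k"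
  shows "k < r \<Longrightarrow> f k \<le> f 0"
proof (induction k)
  case 0 then show ?case by simp
next
  case (Suc k) then show ?case using assms by (meson Suc_lessD less_imp_le order_trans)
qed

lemma sum_list_le_len: "(\<forall>x\<in>set xs. x \<le> (B::int)) \<Longrightarrow> sum_list xs \<le> int (length xs) * B"
  by (induction xs) (auto simp: algebra_simps)

lemma sum_list_lower: "(\<forall>x\<in>set xs. x \<le> (B::int)) \<Longrightarrow> 0 \<le> B \<Longrightarrow> y \<in> set xs \<Longrightarrow>
   sum_list xs - int (length xs) * B \<le> y"
proof (induction xs)
  case Nil then show ?case by simp
next
  case (Cons x xs)
  show ?case
  proof (cases "y = x")
    case True
    have "sum_list xs \<le> int (length xs) * B" using Cons.prems(1) by (intro sum_list_le_len) auto
    then show ?thesis using True Cons.prems by (simp add: algebra_simps)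
  next
    case False
    then have "sum_list xs - int (length xs) * B \<le> y" using Cons by auto
    then show ?thesis using Cons.prems by (simp add: algebra_simps)
  qed
qed

context SM begin

definition Fset :: "'p data \<Rightarrow> int \<Rightarrow> real \<Rightarrow> ('p data list \<times> int list) set" where
  "Fset R d lam = {(Is, ds) \<in> Dset S m \<alpha> R d. mu (hd Is) (hd ds) \<le> lam}"

definition crit :: "'p data \<Rightarrow> real set" where
  "crit R = {mu X e | X e. X \<in> subd R}"

definition Kset :: "'p data \<Rightarrow> real \<Rightarrow> ('p data \<times> int) set" where
  "Kset R nu = {(X, e). X \<in> subd R \<and> dat (diffd R X) \<and> mu X e = nu}"

lemma Dset_iff: "(Is, ds) \<in> Dset S m \<alpha> R d \<longleftrightarrow> part R Is \<and> length ds = length Is \<and> sum_list ds = d \<and>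
    (\<forall>k. Suc k < length Is \<longrightarrow> mu (Is ! Suc k) (ds ! Suc k) < mu (Is ! k) (ds ! k))"
  by (simp add: Dset_def)

lemma subd_dat: "X \<in> subd R \<Longrightarrow> dat X" by (simp add: subd_def)

lemma mu_mult: "dat X \<Longrightarrow> real (nn X) * mu X e = real_of_int e + al X"
  using dat_pos[of X] by (simp add: slope_def)

lemma Dset_Cons:
  assumes "I \<noteq> []"
  shows "(X # I, e # ds) \<in> Dset S m \<alpha> R d \<longleftrightarrow>
     dat X \<and> (I, ds) \<in> Dset S m \<alpha> (lsum I) (sum_list ds) \<and> R = addd X (lsum I) \<and> d = e + sum_list ds
     \<and> mu (hd I) (hd ds) < mu X e"
proof -
  have "(\<forall>k. Suc k < length (X # I) \<longrightarrow> mu ((X # I) ! Suc k) ((e # ds) ! Suc k) < mu ((X # I) ! k) ((e # ds) ! k))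
     \<longleftrightarrow> (mu (I ! 0) (ds ! 0) < mu X e) \<and> (\<forall>k. Suc k < length I \<longrightarrow> mu (I ! Suc k) (ds ! Suc k) < mu (I ! k) (ds ! k))"
    using assms by (subst all_nat_split) auto
  moreover have "length ds = length I \<Longrightarrow> hd I = I ! 0 \<and> hd ds = ds ! 0"
    using assms by (metis hd_conv_nth length_0_conv)
  ultimately show ?thesis
    using assms unfolding Dset_iff part_iff by auto
qed

lemma Dset_single: "([X], [e]) \<in> Dset S m \<alpha> R d \<longleftrightarrow> dat X \<and> R = X \<and> d = e"
  by (auto simp: Dset_iff part_iff)

lemma Dset_nonempty: "(Is, ds) \<in> Dset S m \<alpha> R d \<Longrightarrow> Is \<noteq> [] \<and> ds \<noteq> [] \<and> length ds = length Is"
  by (auto simp: Dset_iff part_iff)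

lemma Dset_slope_le:
  assumes "(Is, ds) \<in> Dset S m \<alpha> R d" "k < length Is"
  shows "mu (Is ! k) (ds ! k) \<le> mu (hd Is) (hd ds)"
proof -
  have "mu (Is ! k) (ds ! k) \<le> mu (Is ! 0) (ds ! 0)"
    using dec_chain[of "length Is" "\<lambda>k. mu (Is ! k) (ds ! k)" k] assms by (auto simp: Dset_iff)
  then show ?thesis using Dset_nonempty[OF assms(1)] by (simp add: hd_conv_nth)
qed

lemma Dset_avg:
  assumes "(Is, ds) \<in> Dset S m \<alpha> R d"
  shows "mu R d \<le> mu (hd Is) (hd ds)" "2 \<le> length Is \<Longrightarrow> mu R d < mu (hd Is) (hd ds)"
proof -
  define r where "r = length Is"
  define s where "s = (\<lambda>k. mu (Is ! k) (ds ! k))"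
  have p: "part R Is" and len: "length ds = r" and sd: "sum_list ds = d"
    using assms by (auto simp: Dset_iff r_def)
  have R: "R = lsum Is" and datI: "\<forall>X\<in>set Is. dat X" "Is \<noteq> []" using p by (auto simp: part_iff)
  have datR: "dat R" using p part_dat by blast
  have le0: "k < r \<Longrightarrow> s k \<le> s 0" for k using Dset_slope_le[OF assms, of k] Dset_nonempty[OF assms]
    by (simp add: s_def r_def hd_conv_nth)
  have hd: "mu (hd Is) (hd ds) = s 0" using Dset_nonempty[OF assms] by (simp add: s_def hd_conv_nth)
  have nk: "k < r \<Longrightarrow> 0 < nn (Is ! k)" for k using datI dat_pos r_def nth_mem by blast
  have eq1: "real (nn R) * mu R d = (\<Sum>k<r. real (nn (Is ! k)) * s k)"
  proof -
    have "real (nn R) * mu R d = real_of_int d + al R" using mu_mult[OF datR] .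
    also have "real_of_int d = (\<Sum>k<r. real_of_int (ds ! k))"
      using sd len by (simp add: sum_list_sum_nth atLeast0LessThan flip: of_int_sum)
    also have "al R = (\<Sum>k<r. al (Is ! k))" unfolding R al_lsum by (simp add: sum_list_map_nth r_def)
    also have "(\<Sum>k<r. real_of_int (ds ! k)) + (\<Sum>k<r. al (Is ! k)) = (\<Sum>k<r. real (nn (Is ! k)) * s k)"
      unfolding sum.distrib[symmetric]
    proof (rule sum.cong[OF refl])
      fix k assume "k \<in> {..<r}"
      then show "real_of_int (ds ! k) + al (Is ! k) = real (nn (Is ! k)) * s k"
        using mu_mult datI r_def s_def by (metis lessThan_iff nth_mem)
    qed
    finally show ?thesis .
  qed
  have eq2: "real (nn R) = (\<Sum>k<r. real (nn (Is ! k)))"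
    unfolding R nn_lsum by (simp add: sum_list_map_nth r_def flip: of_nat_sum)
  have "(\<Sum>k<r. real (nn (Is ! k)) * s k) \<le> (\<Sum>k<r. real (nn (Is ! k)) * s 0)"
    by (rule sum_mono) (simp add: le0 mult_left_mono)
  also have "\<dots> = real (nn R) * s 0" by (simp add: eq2 sum_distrib_right)
  finally have "real (nn R) * mu R d \<le> real (nn R) * s 0" using eq1 by simp
  then show "mu R d \<le> mu (hd Is) (hd ds)" using dat_pos[OF datR] hd by simp
  assume r2: "2 \<le> length Is"
  have "(\<Sum>k<r. real (nn (Is ! k)) * s k) < (\<Sum>k<r. real (nn (Is ! k)) * s 0)"
  proof (rule sum_strict_mono_ex1)
    show "\<forall>x\<in>{..<r}. real (nn (Is ! x)) * s x \<le> real (nn (Is ! x)) * s 0"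
      by (simp add: le0 mult_left_mono)
    have "s 1 < s 0" using assms r2 by (auto simp: Dset_iff s_def)
    then show "\<exists>a\<in>{..<r}. real (nn (Is ! a)) * s a < real (nn (Is ! a)) * s 0"
      using r2 nk[of 1] by (intro bexI[of _ 1]) (auto simp: r_def)
  qed simp
  also have "\<dots> = real (nn R) * s 0" by (simp add: eq2 sum_distrib_right)
  finally have "real (nn R) * mu R d < real (nn R) * s 0" using eq1 by simp
  then show "mu R d < mu (hd Is) (hd ds)" using dat_pos[OF datR] hd by simp
qed

lemma Fset_base: "dat R \<Longrightarrow> Fset R d (mu R d) = {([R], [d])}"
proof (intro equalityI subsetI)
  fix p assume datR: "dat R" and p: "p \<in> Fset R d (mu R d)"
  obtain Is ds where pe: "p = (Is, ds)" by fastforce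
  have D: "(Is, ds) \<in> Dset S m \<alpha> R d" and le: "mu (hd Is) (hd ds) \<le> mu R d"
    using p pe by (auto simp: Fset_def)
  have "\<not> 2 \<le> length Is" using Dset_avg(2)[OF D] le by linarith
  moreover have "Is \<noteq> []" "length ds = length Is" using Dset_nonempty[OF D] by auto
  moreover have "length Is \<noteq> 0" using \<open>Is \<noteq> []\<close> by simp
  ultimately have "length Is = 1" "length ds = 1" by arith+
  then obtain X e where "Is = [X]" "ds = [e]" by (metis One_nat_def length_0_conv length_Suc_conv)
  then show "p \<in> {([R], [d])}" using D pe by (auto simp: Dset_single)
next
  fix p assume datR: "dat R" and "p \<in> {([R], [d])}"
  then show "p \<in> Fset R d (mu R d)" by (auto simp: Fset_def Dset_single)
qed

lemma finite_Fset:
  assumes datR: "dat R"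
  shows "finite (Fset R d lam)"
proof -
  define A where "A = (\<Sum>X\<in>subd R. \<bar>al X\<bar>)"
  define B where "B = \<lfloor>real (nn R) * \<bar>lam\<bar> + A\<rfloor>"
  have A: "X \<in> subd R \<Longrightarrow> \<bar>al X\<bar> \<le> A" for X
    unfolding A_def by (rule member_le_sum) (auto simp: finite_subd)
  have A0: "0 \<le> A" unfolding A_def by (simp add: sum_nonneg)
  have B0: "0 \<le> B" unfolding B_def using A0 by simp
  have "Fset R d lam \<subseteq> Parts R \<times> {xs. set xs \<subseteq> {d - int (nn R) * B .. B} \<and> length xs \<le> nn R}"
  proof
    fix pp assume pF: "pp \<in> Fset R d lam"
    obtain Is ds where pe: "pp = (Is, ds)" by fastforce
    have F: "(Is, ds) \<in> Fset R d lam" using pF pe by simp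
    have D: "(Is, ds) \<in> Dset S m \<alpha> R d" and le: "mu (hd Is) (hd ds) \<le> lam"
      using F by (auto simp: Fset_def)
    have p: "part R Is" and len: "length ds = length Is" and sd: "sum_list ds = d"
      using D by (auto simp: Dset_iff)
    have lenR: "length Is \<le> nn R" using part_length[OF p] .
    have up: "x \<le> B" if x: "x \<in> set ds" for x
    proof -
      obtain k where k: "k < length ds" "x = ds ! k" using x by (metis in_set_conv_nth)
      have X: "Is ! k \<in> subd R" using part_subd[OF p] k len by simp
      have dX: "dat (Is ! k)" using X subd_dat by blast
      have "mu (Is ! k) x \<le> lam" using Dset_slope_le[OF D, of k] k len le by simp
      then have "real_of_int x + al (Is ! k) \<le> real (nn (Is ! k)) * lam"
        using mu_mult[OF dX, of x] dat_pos[OF dX] by (metis mult_left_mono of_nat_0_le_iff)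
      moreover have "real (nn (Is ! k)) * lam \<le> real (nn R) * \<bar>lam\<bar>"
      proof -
        have "nn (Is ! k) \<le> nn R"
        proof -
          have "nn (Is ! k) \<le> sum_list (map nn Is)"
            using k len by (simp add: member_le_sum_list)
          then show ?thesis using p by (simp add: part_iff nn_lsum)
        qed
        then have "real (nn (Is ! k)) * lam \<le> real (nn (Is ! k)) * \<bar>lam\<bar>" by (simp add: mult_left_mono)
        also have "\<dots> \<le> real (nn R) * \<bar>lam\<bar>" using \<open>nn (Is ! k) \<le> nn R\<close> by (simp add: mult_right_mono)
        finally show ?thesis .
      qed
      ultimately have "real_of_int x \<le> real (nn R) * \<bar>lam\<bar> + A" using A[OF X] by linarith
      then show ?thesis unfolding B_def by linarith
    qed
    have "set ds \<subseteq> {d - int (nn R) * B .. B}"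
    proof
      fix x assume x: "x \<in> set ds"
      have "sum_list ds - int (length ds) * B \<le> x" using sum_list_lower[OF _ B0 x] up by blast
      moreover have "int (length ds) * B \<le> int (nn R) * B" using len lenR B0 by (simp add: mult_right_mono)
      ultimately show "x \<in> {d - int (nn R) * B .. B}" using up[OF x] sd by auto
    qed
    then show "pp \<in> Parts R \<times> {xs. set xs \<subseteq> {d - int (nn R) * B .. B} \<and> length xs \<le> nn R}"
      using p len lenR pe by (simp add: Parts_def)
  qed
  moreover have "finite (Parts R \<times> {xs. set xs \<subseteq> {d - int (nn R) * B .. B} \<and> length xs \<le> nn R})"
    by (intro finite_cartesian_product finite_Parts finite_lists_length_le) simp
  ultimately show ?thesis using finite_subset by blast
qed

end

context SM begin

definition TT :: "('p data \<Rightarrow> int \<Rightarrow> rat fls) \<Rightarrow> 'p data list \<times> int list \<Rightarrow> rat fls" where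
  "TT Qd p = qterm S m Qd (fst p) (snd p)"

definition cross :: "'p data \<Rightarrow> int \<Rightarrow> 'p data \<Rightarrow> int \<Rightarrow> int" where
  "cross R d X e = e * int (nn (diffd R X)) - (d - e) * int (nn X) - sig2 S m X (diffd R X)"

definition delta_ok :: "'p data \<Rightarrow> real \<Rightarrow> real \<Rightarrow> bool" where
  "delta_ok R nu \<delta> \<longleftrightarrow> 0 < \<delta> \<and> (\<forall>X\<in>subd R. \<forall>t. 0 < t \<and> t \<le> \<delta> \<longrightarrow> fl S m \<alpha> (nu - t) X = lf S m \<alpha> nu X)"

lemma delta_exists: "dat R \<Longrightarrow> \<exists>\<delta>. delta_ok R nu \<delta>"
proof -
  assume datR: "dat R"
  define y where "y = (\<lambda>X. real (nn X) * nu - al X)"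
  define g where "g = (\<lambda>X. (y X - (of_int \<lceil>y X\<rceil> - 1)) / real (nn X))"
  have gpos: "X \<in> subd R \<Longrightarrow> 0 < g X" for X
  proof -
    assume X: "X \<in> subd R"
    have "of_int \<lceil>y X\<rceil> - 1 < y X" using ceiling_correct[of "y X"] by simp
    then show ?thesis using dat_pos[OF subd_dat[OF X]] by (simp add: g_def)
  qed
  define \<delta> where "\<delta> = Min (g ` subd R)"
  have ne: "g ` subd R \<noteq> {}" using R_subd[OF datR] by blast
  have fin: "finite (g ` subd R)" using finite_subd by simp
  have dpos: "0 < \<delta>" unfolding \<delta>_def using Min_gr_iff[OF fin ne] gpos by blast
  have "fl S m \<alpha> (nu - t) X = lf S m \<alpha> nu X" if X: "X \<in> subd R" and t: "0 < t" "t \<le> \<delta>" for X t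
  proof -
    have np: "0 < real (nn X)" using dat_pos[OF subd_dat[OF X]] by simp
    have "t \<le> g X" using t Min_le[OF fin] X unfolding \<delta>_def by fastforce
    then have "real (nn X) * t \<le> y X - (of_int \<lceil>y X\<rceil> - 1)"
      using np by (simp add: g_def pos_le_divide_eq mult.commute)
    moreover have "0 < real (nn X) * t" using np t by simp
    moreover have "y X \<le> of_int \<lceil>y X\<rceil>" by (rule le_of_int_ceiling)
    ultimately have "of_int (\<lceil>y X\<rceil> - 1) \<le> y X - real (nn X) * t"
       "y X - real (nn X) * t < of_int (\<lceil>y X\<rceil> - 1) + 1" by linarith+
    then have "\<lfloor>y X - real (nn X) * t\<rfloor> = \<lceil>y X\<rceil> - 1"
      by (rule floor_unique)
    then show ?thesis by (simp add: fl_def lf_def y_def algebra_simps)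
  qed
  then show ?thesis using dpos unfolding delta_ok_def by blast
qed

lemma below_crit:
  assumes "delta_ok R nu \<delta>" "X \<in> subd R" "mu X e < nu" "0 < t" "t \<le> \<delta>"
  shows "mu X e \<le> nu - t"
proof -
  have np: "0 < real (nn X)" using dat_pos[OF subd_dat[OF assms(2)]] by simp
  have "real_of_int e + al X < real (nn X) * nu"
    using assms(3) np by (simp add: slope_def pos_divide_less_eq mult.commute)
  then have "e < \<lceil>real (nn X) * nu - al X\<rceil>" by (simp add: less_ceiling_iff)
  then have "e \<le> lf S m \<alpha> nu X" by (simp add: lf_def)
  also have "\<dots> = fl S m \<alpha> (nu - t) X" using assms unfolding delta_ok_def by auto
  finally have "real_of_int e \<le> real (nn X) * (nu - t) - al X"
    unfolding fl_def by (meson le_floor_iff)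
  then show ?thesis using np by (simp add: slope_def pos_divide_le_eq mult.commute)
qed

lemma finite_crit: "finite (crit R \<inter> {a<..b})"
proof -
  have "crit R \<inter> {a<..b} \<subseteq>
     (\<Union>X\<in>subd R. (\<lambda>e. mu X e) ` {\<lceil>real (nn X) * a - al X\<rceil>..\<lfloor>real (nn X) * b - al X\<rfloor>})"
  proof
    fix z assume z: "z \<in> crit R \<inter> {a<..b}"
    then obtain X e where X: "X \<in> subd R" and ze: "z = mu X e" by (auto simp: crit_def)
    have np: "0 < real (nn X)" using dat_pos[OF subd_dat[OF X]] by simp
    have "a < (real_of_int e + al X) / real (nn X)" "(real_of_int e + al X) / real (nn X) \<le> b"
      using z ze by (auto simp: slope_def)
    then have "real (nn X) * a < real_of_int e + al X" "real_of_int e + al X \<le> real (nn X) * b"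
      using np by (simp_all add: pos_less_divide_eq pos_divide_le_eq mult.commute)
    then have "\<lceil>real (nn X) * a - al X\<rceil> \<le> e" "e \<le> \<lfloor>real (nn X) * b - al X\<rfloor>"
      by (simp_all add: ceiling_le_iff le_floor_iff)
    then have "e \<in> {\<lceil>real (nn X) * a - al X\<rceil>..\<lfloor>real (nn X) * b - al X\<rfloor>}" by simp
    then show "z \<in> (\<Union>X\<in>subd R. (\<lambda>e. mu X e) ` {\<lceil>real (nn X) * a - al X\<rceil>..\<lfloor>real (nn X) * b - al X\<rfloor>})"
      unfolding ze by (intro UN_I[OF X] imageI)
  qed
  moreover have "finite (\<Union>X\<in>subd R. (\<lambda>e. mu X e) ` {\<lceil>real (nn X) * a - al X\<rceil>..\<lfloor>real (nn X) * b - al X\<rfloor>})"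
    using finite_subd by blast
  ultimately show ?thesis using finite_subset by blast
qed

lemma Dset_hd_subd: "(Is, ds) \<in> Dset S m \<alpha> R d \<Longrightarrow> hd Is \<in> subd R"
  using Dset_nonempty part_subd by (metis Dset_iff hd_in_set)

lemma Fset_const:
  assumes "a \<le> b" "crit R \<inter> {a<..b} = {}"
  shows "Fset R d b = Fset R d a"
proof -
  have "mu (hd Is) (hd ds) \<le> b \<longleftrightarrow> mu (hd Is) (hd ds) \<le> a" if "(Is, ds) \<in> Dset S m \<alpha> R d" for Is ds
  proof -
    have "mu (hd Is) (hd ds) \<in> crit R" using Dset_hd_subd[OF that] by (auto simp: crit_def)
    then show ?thesis using assms by auto
  qed
  then show ?thesis unfolding Fset_def by blast
qed

lemma finite_Kset: "finite (Kset R nu)"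
proof -
  have "Kset R nu \<subseteq> (\<lambda>X. (X, fl S m \<alpha> nu X)) ` subd R"
  proof
    fix p assume p: "p \<in> Kset R nu"
    then obtain X e where pe: "p = (X, e)" and X: "X \<in> subd R" and mu: "mu X e = nu"
      by (auto simp: Kset_def)
    have "real_of_int e = real (nn X) * nu - al X"
      using mu mu_mult[OF subd_dat[OF X], of e] by simp
    then have "e = fl S m \<alpha> nu X" unfolding fl_def by (metis floor_of_int)
    then show "p \<in> (\<lambda>X. (X, fl S m \<alpha> nu X)) ` subd R" using pe X by auto
  qed
  then show ?thesis using finite_subd finite_subset by blast
qed

lemma A_jump:
  assumes datR: "dat R" and nu: "mu R d < nu" and del: "delta_ok R nu \<delta>" and t: "0 < t" "t \<le> \<delta>"
  shows "sum (TT Qd) (Fset R d nu) - sum (TT Qd) (Fset R d (nu - t)) =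
    (\<Sum>(X,e)\<in>Kset R nu. fls_X_intpow (cross R d X e) * Qd X e * sum (TT Qd) (Fset (diffd R X) (d - e) (nu - t)))"
proof -
  define G where "G = Sigma (Kset R nu) (\<lambda>(X,e). Fset (diffd R X) (d - e) (nu - t))"
  define \<phi> :: "('p data \<times> int) \<times> ('p data list \<times> int list) \<Rightarrow> 'p data list \<times> int list"
    where "\<phi> = (\<lambda>((X,e),(I,ds)). (X # I, e # ds))"
  have sub: "Fset R d (nu - t) \<subseteq> Fset R d nu" using t by (auto simp: Fset_def)
  have fin: "finite (Fset R d nu)" using finite_Fset[OF datR] .
  have finK: "finite (Kset R nu)" by (rule finite_Kset)
  have finF: "\<forall>p\<in>Kset R nu. finite ((\<lambda>(X,e). Fset (diffd R X) (d - e) (nu - t)) p)"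
    by (auto simp: Kset_def intro: finite_Fset)
  have diff: "Fset R d nu - Fset R d (nu - t) = \<phi> ` G"
  proof (intro equalityI subsetI)
    fix p assume p: "p \<in> Fset R d nu - Fset R d (nu - t)"
    obtain Is ds where pe: "p = (Is, ds)" by fastforce
    have D: "(Is, ds) \<in> Dset S m \<alpha> R d" and le: "mu (hd Is) (hd ds) \<le> nu"
      and nle: "\<not> mu (hd Is) (hd ds) \<le> nu - t" using p pe by (auto simp: Fset_def)
    have hdsub: "hd Is \<in> subd R" using Dset_hd_subd[OF D] .
    have eqnu: "mu (hd Is) (hd ds) = nu"
      using below_crit[OF del hdsub _ t] le nle by force
    obtain X I where IsX: "Is = X # I" using Dset_nonempty[OF D] by (meson list.exhaust)
    obtain e ds' where dse: "ds = e # ds'" using Dset_nonempty[OF D] by (meson list.exhaust)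
    have len': "length ds' = length I" using Dset_nonempty[OF D] IsX dse by simp
    have Ine: "I \<noteq> []"
    proof
      assume "I = []"
      then have "ds' = []" using len' by simp
      then have "R = X" "d = e" using D IsX dse \<open>I = []\<close> by (auto simp: Dset_single)
      then show False using eqnu nu IsX dse by simp
    qed
    have C: "dat X" "(I, ds') \<in> Dset S m \<alpha> (lsum I) (sum_list ds')" "R = addd X (lsum I)"
       "d = e + sum_list ds'" "mu (hd I) (hd ds') < mu X e"
      using D IsX dse Dset_Cons[OF Ine] by auto
    have dR: "diffd R X = lsum I" using C(3) by simp
    have de: "d - e = sum_list ds'" using C(4) by simp
    have XK: "(X, e) \<in> Kset R nu"
    proof -
      have "X \<in> subd R" using hdsub IsX by simp
      moreover have "dat (diffd R X)" using dR C(2) part_dat by (auto simp: Dset_iff)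
      moreover have "mu X e = nu" using eqnu IsX dse by simp
      ultimately show ?thesis by (simp add: Kset_def)
    qed
    have hdI: "hd I \<in> subd R" using C(2) Dset_hd_subd subd_trans IsX D
      by (metis Dset_iff hd_in_set list.set_intros(2) part_subd Ine)
    have "mu (hd I) (hd ds') \<le> nu - t"
      using below_crit[OF del hdI _ t] C(5) eqnu IsX dse by simp
    then have "(I, ds') \<in> Fset (diffd R X) (d - e) (nu - t)"
      using C(2) dR de by (simp add: Fset_def)
    then have "((X, e), (I, ds')) \<in> G" using XK by (simp add: G_def)
    moreover have "p = \<phi> ((X, e), (I, ds'))" using pe IsX dse by (simp add: \<phi>_def)
    ultimately show "p \<in> \<phi> ` G" by blast
  next
    fix p assume "p \<in> \<phi> ` G"
    then obtain X e I ds' where pe: "p = (X # I, e # ds')" and XK: "(X, e) \<in> Kset R nu"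
      and F: "(I, ds') \<in> Fset (diffd R X) (d - e) (nu - t)"
      by (auto simp: G_def \<phi>_def)
    have X: "X \<in> subd R" "dat (diffd R X)" "mu X e = nu" using XK by (auto simp: Kset_def)
    have D': "(I, ds') \<in> Dset S m \<alpha> (diffd R X) (d - e)" and le': "mu (hd I) (hd ds') \<le> nu - t"
      using F by (auto simp: Fset_def)
    have Ine: "I \<noteq> []" using Dset_nonempty[OF D'] by simp
    have lI: "lsum I = diffd R X" using D' by (simp add: Dset_iff part_iff)
    have sI: "sum_list ds' = d - e" using D' by (simp add: Dset_iff)
    have RX: "addd X (diffd R X) = R" using X(1) by (intro addd_diffd) (auto simp: subd_def)
    have "(X # I, e # ds') \<in> Dset S m \<alpha> R d"
      unfolding Dset_Cons[OF Ine] using X D' lI sI RX le' t subd_dat by auto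
    moreover have "mu (hd (X # I)) (hd (e # ds')) = nu" using X by simp
    ultimately show "p \<in> Fset R d nu - Fset R d (nu - t)" using pe t by (auto simp: Fset_def)
  qed
  have inj: "inj_on \<phi> G" by (rule inj_onI) (auto simp: \<phi>_def)
  have "sum (TT Qd) (Fset R d nu) - sum (TT Qd) (Fset R d (nu - t)) = sum (TT Qd) (\<phi> ` G)"
    by (simp only: diff[symmetric] sum_diff[OF fin sub])
  also have "\<dots> = sum (TT Qd \<circ> \<phi>) G" using sum.reindex[OF inj] by simp
  also have "\<dots> = (\<Sum>p\<in>Kset R nu. \<Sum>q\<in>(\<lambda>(X,e). Fset (diffd R X) (d - e) (nu - t)) p. (TT Qd \<circ> \<phi>) (p, q))"
    unfolding G_def by (subst sum.Sigma[OF finK finF]) (simp add: case_prod_beta)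
  also have "\<dots> = (\<Sum>(X,e)\<in>Kset R nu. fls_X_intpow (cross R d X e) * Qd X e * sum (TT Qd) (Fset (diffd R X) (d - e) (nu - t)))"
  proof (rule sum.cong[OF refl], clarify)
    fix X e assume XK: "(X, e) \<in> Kset R nu"
    show "(\<Sum>q\<in>Fset (diffd R X) (d - e) (nu - t). (TT Qd \<circ> \<phi>) ((X, e), q)) =
       fls_X_intpow (cross R d X e) * Qd X e * sum (TT Qd) (Fset (diffd R X) (d - e) (nu - t))"
      unfolding sum_distrib_left
    proof (rule sum.cong[OF refl], clarify)
      fix I ds' assume F: "(I, ds') \<in> Fset (diffd R X) (d - e) (nu - t)"
      have D': "(I, ds') \<in> Dset S m \<alpha> (diffd R X) (d - e)" using F by (simp add: Fset_def)
      have lI: "lsum I = diffd R X" using D' by (simp add: Dset_iff part_iff)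
      have sI: "sum_list ds' = d - e" using D' by (simp add: Dset_iff)
      have len: "length ds' = length I" using D' by (simp add: Dset_iff)
      show "(TT Qd \<circ> \<phi>) ((X, e), I, ds') = fls_X_intpow (cross R d X e) * Qd X e * TT Qd (I, ds')"
        using qterm_Cons[OF len, of Qd X e] lI sI by (simp add: TT_def \<phi>_def cross_def)
    qed
  qed
  finally show ?thesis .
qed

end

lemma split_sum3:
  fixes f :: "nat \<Rightarrow> 'a::comm_monoid_add"
  assumes "1 \<le> c" "c < r"
  shows "(\<Sum>k\<in>{1..<r}. f k) = (\<Sum>k\<in>{1..<c}. f k) + f c + (\<Sum>j\<in>{1..<r-c}. f (c + j))"
proof -
  have "(\<Sum>k\<in>{1..<r}. f k) = (\<Sum>k\<in>{1..<c}. f k) + (\<Sum>k\<in>{c..<r}. f k)"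
    using assms sum.atLeastLessThan_concat[of 1 c r f] by simp
  also have "(\<Sum>k\<in>{c..<r}. f k) = f c + (\<Sum>k\<in>{Suc c..<r}. f k)"
    using assms by (simp add: sum.atLeast_Suc_lessThan)
  also have "(\<Sum>k\<in>{Suc c..<r}. f k) = (\<Sum>j\<in>{1..<r-c}. f (c + j))"
    using sum.shift_bounds_nat_ivl[of f 1 c "r-c"] assms by (simp add: add.commute)
  finally show ?thesis by (simp add: add.assoc)
qed

lemma split_prod_remove:
  fixes f :: "nat \<Rightarrow> 'a::comm_monoid_mult"
  assumes "1 \<le> c" "c < r"
  shows "(\<Prod>k\<in>{1..<r}-{c}. f k) = (\<Prod>k\<in>{1..<c}. f k) * (\<Prod>j\<in>{1..<r-c}. f (c + j))"
proof -
  have "{1..<r}-{c} = {1..<c} \<union> {Suc c..<r}" using assms by auto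
  then have "(\<Prod>k\<in>{1..<r}-{c}. f k) = (\<Prod>k\<in>{1..<c}. f k) * (\<Prod>k\<in>{Suc c..<r}. f k)"
    by (simp add: prod.union_disjoint)
  also have "(\<Prod>k\<in>{Suc c..<r}. f k) = (\<Prod>j\<in>{1..<r-c}. f (c + j))"
    using prod.shift_bounds_nat_ivl[of f 1 c "r-c"] assms by (simp add: add.commute)
  finally show ?thesis .
qed

lemma fls_X_pow_minus_one_nz: "0 < a \<Longrightarrow> (fls_X ^ a - 1 :: rat fls) \<noteq> 0"
proof
  assume "0 < a" "(fls_X ^ a - 1 :: rat fls) = 0"
  then have "(fls_X ^ a :: rat fls) = 1" by simp
  then have "fls_subdegree (fls_X ^ a :: rat fls) = 0" by simp
  then show False using \<open>0 < a\<close> by simp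
qed

lemma fls_X_pow_intpow: "(fls_X ^ a :: rat fls) = fls_X_intpow (int a)"
  by (simp add: fls_X_power_conv_shift_1)

context SM begin

definition aa :: "'p data list \<Rightarrow> nat \<Rightarrow> nat" where
  "aa Is k = nn (Is ! (k - 1)) + nn (Is ! k)"

definition Padj :: "'p data list \<Rightarrow> rat fls" where
  "Padj Is = (\<Prod>k\<in>{1..<length Is}. inverse (fls_X ^ aa Is k - 1))"

definition PQ :: "('p data \<Rightarrow> rat fls) \<Rightarrow> 'p data list \<Rightarrow> rat fls" where
  "PQ Q Is = (\<Prod>k<length Is. Q (Is ! k))"

definition Mlf :: "'p data list \<Rightarrow> real \<Rightarrow> int" where
  "Mlf Is lam = (\<Sum>k\<in>{1..<length Is}. int (aa Is k) * lf S m \<alpha> lam (prefix_data Is k))"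

definition Mmix :: "'p data list \<Rightarrow> real \<Rightarrow> nat \<Rightarrow> int" where
  "Mmix Is lam c = (\<Sum>k\<in>{1..<length Is}. int (aa Is k) *
     (if k < c then fl S m \<alpha> lam (prefix_data Is k) else lf S m \<alpha> lam (prefix_data Is k)))"

lemma Mexp_fl: "Mexp S m \<alpha> Is lam = (\<Sum>k\<in>{1..<length Is}. int (aa Is k) * fl S m \<alpha> lam (prefix_data Is k))"
  by (simp add: Mexp_def fl_def aa_def)

definition Gt :: "('p data \<Rightarrow> rat fls) \<Rightarrow> 'p data \<Rightarrow> int \<Rightarrow> real \<Rightarrow> 'p data list \<Rightarrow> rat fls" where
  "Gt Q R d lam Is = fls_X_intpow (M'exp S m R Is d + Mexp S m \<alpha> Is lam) * Padj Is * PQ Q Is"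

definition Glf :: "('p data \<Rightarrow> rat fls) \<Rightarrow> 'p data \<Rightarrow> int \<Rightarrow> real \<Rightarrow> 'p data list \<Rightarrow> rat fls" where
  "Glf Q R d lam Is = fls_X_intpow (M'exp S m R Is d + Mlf Is lam) * Padj Is * PQ Q Is"

definition Slm :: "('p data \<Rightarrow> rat fls) \<Rightarrow> 'p data \<Rightarrow> int \<Rightarrow> real \<Rightarrow> rat fls" where
  "Slm Q R d lam = sum (Glf Q R d lam) (Parts R)"

definition jt :: "('p data \<Rightarrow> rat fls) \<Rightarrow> 'p data \<Rightarrow> int \<Rightarrow> real \<Rightarrow> 'p data list \<Rightarrow> nat \<Rightarrow> rat fls" where
  "jt Q R d lam Is c = fls_X_intpow (M'exp S m R Is d + Mmix Is lam c)
     * (\<Prod>k\<in>{1..<length Is}-{c}. inverse (fls_X ^ aa Is k - 1)) * PQ Q Is"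

definition intg :: "real \<Rightarrow> 'p data \<Rightarrow> bool" where
  "intg lam X \<longleftrightarrow> real_of_int (fl S m \<alpha> lam X) = real (nn X) * lam - al X"

lemma Slam_eq: "Slam S m \<alpha> Q R d lam = sum (Gt Q R d lam) (Parts R)"
  by (simp add: Slam_def Gt_def Parts_def Padj_def PQ_def aa_def)

lemma fl_lf: "fl S m \<alpha> lam X - lf S m \<alpha> lam X = (if intg lam X then 1 else 0)"
  unfolding fl_def lf_def intg_def by (simp add: ceiling_altdef) (metis floor_of_int)

lemma aa_pos: "\<forall>X\<in>set Is. dat X \<Longrightarrow> k < length Is \<Longrightarrow> 0 < aa Is k"
proof -
  assume a: "\<forall>X\<in>set Is. dat X" "k < length Is"
  then have "dat (Is ! k)" by simp
  then have "0 < nn (Is ! k)" by (rule dat_pos)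
  then show ?thesis unfolding aa_def by simp
qed

lemma J1:
  assumes datI: "\<forall>X\<in>set Is. dat X" and ne: "Is \<noteq> []"
  shows "Gt Q R d nu Is - Glf Q R d nu Is =
     (\<Sum>c\<in>{1..<length Is}. if intg nu (prefix_data Is c) then jt Q R d nu Is c else 0)"
proof -
  define r where "r = length Is"
  define M' where "M' = M'exp S m R Is d"
  define E where "E = (\<lambda>c. fls_X_intpow (M' + Mmix Is nu c) :: rat fls)"
  have r1: "1 \<le> r" using ne by (simp add: r_def Suc_le_eq)
  have E1: "E 1 = fls_X_intpow (M' + Mlf Is nu)"
    unfolding E_def Mmix_def Mlf_def by (rule arg_cong[where f="\<lambda>z. fls_X_intpow (M' + z)"], rule sum.cong) auto
  have Er: "E r = fls_X_intpow (M' + Mexp S m \<alpha> Is nu)"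
    unfolding E_def Mmix_def Mexp_fl r_def by (rule arg_cong[where f="\<lambda>z. fls_X_intpow (M' + z)"], rule sum.cong) auto
  have Msuc: "Mmix Is nu (Suc c) = Mmix Is nu c + int (aa Is c) * (if intg nu (prefix_data Is c) then 1 else 0)"
    if c: "c \<in> {1..<r}" for c
  proof -
    have "Mmix Is nu (Suc c) - Mmix Is nu c =
       (\<Sum>k\<in>{1..<r}. if k = c then int (aa Is k) * (fl S m \<alpha> nu (prefix_data Is k) - lf S m \<alpha> nu (prefix_data Is k)) else 0)"
      unfolding Mmix_def r_def[symmetric] sum_subtractf[symmetric]
      by (rule sum.cong) (auto simp: algebra_simps)
    also have "\<dots> = int (aa Is c) * (fl S m \<alpha> nu (prefix_data Is c) - lf S m \<alpha> nu (prefix_data Is c))"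
      using c by (simp add: sum.delta)
    finally show ?thesis by (simp add: fl_lf)
  qed
  have Pad: "(fls_X_intpow (int (aa Is c)) - 1) * Padj Is = (\<Prod>k\<in>{1..<r}-{c}. inverse (fls_X ^ aa Is k - 1))"
    if c: "c \<in> {1..<r}" for c
  proof -
    have nz: "(fls_X ^ aa Is c - 1 :: rat fls) \<noteq> 0"
      using fls_X_pow_minus_one_nz aa_pos[OF datI, of c] c r_def by auto
    have "Padj Is = inverse (fls_X ^ aa Is c - 1) * (\<Prod>k\<in>{1..<r}-{c}. inverse (fls_X ^ aa Is k - 1))"
      unfolding Padj_def r_def[symmetric] using c by (simp add: prod.remove)
    then show ?thesis using nz by (simp add: fls_X_pow_intpow[symmetric])
  qed
  have "Gt Q R d nu Is - Glf Q R d nu Is = (E r - E 1) * Padj Is * PQ Q Is"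
    unfolding Gt_def Glf_def E1 Er M'_def by (simp add: algebra_simps)
  also have "E r - E 1 = (\<Sum>c\<in>{1..<r}. E (Suc c) - E c)"
    using sum_Suc_diff'[OF r1, of E] by simp
  also have "(\<Sum>c\<in>{1..<r}. E (Suc c) - E c) * Padj Is * PQ Q Is =
      (\<Sum>c\<in>{1..<r}. (E (Suc c) - E c) * Padj Is * PQ Q Is)"
    by (simp add: sum_distrib_right)
  also have "\<dots> = (\<Sum>c\<in>{1..<r}. if intg nu (prefix_data Is c) then jt Q R d nu Is c else 0)"
  proof (rule sum.cong[OF refl])
    fix c assume c: "c \<in> {1..<r}"
    show "(E (Suc c) - E c) * Padj Is * PQ Q Is = (if intg nu (prefix_data Is c) then jt Q R d nu Is c else 0)"
    proof (cases "intg nu (prefix_data Is c)")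
      case True
      have ex: "M' + Mmix Is nu (Suc c) = (M' + Mmix Is nu c) + int (aa Is c)" using Msuc[OF c] True by simp
      have "E (Suc c) = E c * fls_X_intpow (int (aa Is c))"
        unfolding E_def ex by (rule fls_X_intpow_times_fls_X_intpow[symmetric])
      then have "(E (Suc c) - E c) * Padj Is * PQ Q Is = E c * ((fls_X_intpow (int (aa Is c)) - 1) * Padj Is) * PQ Q Is"
        by (simp add: algebra_simps)
      also have "\<dots> = jt Q R d nu Is c" unfolding Pad[OF c] jt_def E_def M'_def r_def by simp
      finally show ?thesis using True by simp
    next
      case False
      then have "E (Suc c) = E c" unfolding E_def Msuc[OF c] by simp
      then show ?thesis using False by simp
    qed
  qed
  finally show ?thesis by (simp add: r_def)
qed

end

context SM begin

lemma aa_sum: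
  assumes "Is \<noteq> []"
  shows "int (\<Sum>k\<in>{1..<length Is}. aa Is k) = 2 * int (nn (lsum Is)) - int (nn (hd Is)) - int (nn (last Is))"
proof -
  define r where "r = length Is"
  have r1: "1 \<le> r" using assms by (simp add: r_def Suc_le_eq)
  have tot: "nn (lsum Is) = (\<Sum>k<r. nn (Is ! k))" by (simp add: nn_lsum sum_list_map_nth r_def)
  have A: "(\<Sum>k\<in>{1..<r}. nn (Is ! k)) + nn (Is ! 0) = (\<Sum>k<r. nn (Is ! k))"
  proof -
    have "(\<Sum>k<r. nn (Is ! k)) = (\<Sum>k\<in>{0..<r}. nn (Is ! k))" by (simp add: atLeast0LessThan)
    also have "\<dots> = nn (Is ! 0) + (\<Sum>k\<in>{Suc 0..<r}. nn (Is ! k))" using r1 by (simp add: sum.atLeast_Suc_lessThan)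
    finally show ?thesis by simp
  qed
  have B: "(\<Sum>k\<in>{1..<r}. nn (Is ! (k - 1))) + nn (Is ! (r - 1)) = (\<Sum>k<r. nn (Is ! k))"
  proof -
    have "(\<Sum>k\<in>{1..<r}. nn (Is ! (k - 1))) = (\<Sum>k\<in>{0..<r-1}. nn (Is ! k))"
      using sum.shift_bounds_nat_ivl[of "\<lambda>k. nn (Is ! (k - 1))" 0 1 "r - 1"] r1 by simp
    moreover have "(\<Sum>k<r. nn (Is ! k)) = (\<Sum>k<Suc (r-1). nn (Is ! k))" using r1 by simp
    ultimately show ?thesis by (simp add: atLeast0LessThan)
  qed
  have "(\<Sum>k\<in>{1..<r}. aa Is k) = (\<Sum>k\<in>{1..<r}. nn (Is ! (k - 1))) + (\<Sum>k\<in>{1..<r}. nn (Is ! k))"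
    by (simp add: aa_def sum.distrib)
  then have e1: "(\<Sum>k\<in>{1..<r}. aa Is k) + nn (Is ! 0) + nn (Is ! (r - 1)) = 2 * nn (lsum Is)"
    using A B tot by simp
  have e2: "int (\<Sum>k\<in>{1..<r}. aa Is k) + int (nn (Is ! 0)) + int (nn (Is ! (r - 1))) = 2 * int (nn (lsum Is))"
    using arg_cong[OF e1, of int] by simp
  then have e3: "int (\<Sum>k\<in>{1..<r}. aa Is k) = 2 * int (nn (lsum Is)) - int (nn (Is ! 0)) - int (nn (Is ! (r - 1)))"
    by linarith
  have "hd Is = Is ! 0" "last Is = Is ! (r - 1)" using assms by (simp_all add: hd_conv_nth last_conv_nth r_def)
  then show ?thesis using e3 unfolding r_def by simp
qed

lemma PQ_list: "PQ Q Is = prod_list (map Q Is)"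
  by (simp add: PQ_def prod_list_map_nth)

lemma PQ_append: "PQ Q (I1 @ I2) = PQ Q I1 * PQ Q I2"
  by (simp add: PQ_list)

lemma lf_X:
  assumes "real_of_int e = real (nn X) * nu - al X"
  shows "lf S m \<alpha> nu X = e - 1" "lf S m \<alpha> nu (addd X Y) = e + lf S m \<alpha> nu Y"
proof -
  show "lf S m \<alpha> nu X = e - 1" unfolding lf_def assms[symmetric] by simp
  have "real (nn (addd X Y)) * nu - al (addd X Y) = real_of_int e + (real (nn Y) * nu - al Y)"
    using assms by (simp add: nn_add al_add algebra_simps)
  moreover have "\<lceil>real_of_int e + (real (nn Y) * nu - al Y)\<rceil> = \<lceil>real (nn Y) * nu - al Y\<rceil> + e"
    using ceiling_add_of_int[of "real (nn Y) * nu - al Y" e] by (simp add: add.commute)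
  ultimately show "lf S m \<alpha> nu (addd X Y) = e + lf S m \<alpha> nu Y"
    unfolding lf_def by simp
qed

lemma J2:
  assumes ne1: "I1 \<noteq> []" and ne2: "I2 \<noteq> []" and d1: "\<forall>Y\<in>set I1. dat Y" and d2: "\<forall>Y\<in>set I2. dat Y"
    and X: "X = lsum I1" and R: "R = lsum (I1 @ I2)" and e: "real_of_int e = real (nn X) * nu - al X"
  shows "jt Q R d nu (I1 @ I2) (length I1) = fls_X_intpow (cross R d X e) * Gt Q X e nu I1 * Glf Q (lsum I2) (d - e) nu I2"
proof -
  define I where "I = I1 @ I2"
  define c where "c = length I1"
  define r2 where "r2 = length I2"
  define R2 where "R2 = lsum I2"
  have r: "length I = c + r2" by (simp add: I_def c_def r2_def)
  have c1: "1 \<le> c" using ne1 by (simp add: c_def Suc_le_eq)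
  have r21: "1 \<le> r2" using ne2 by (simp add: r2_def Suc_le_eq)
  have cr: "c < length I" using r r21 by simp
  have RR: "R = addd X R2" using R X by (simp add: lsum_append R2_def)
  have dRX: "diffd R X = R2" using RR by simp
  have nR: "nn R = nn X + nn R2" using RR nn_add by simp
  have nth1: "k < c \<Longrightarrow> I ! k = I1 ! k" for k by (simp add: I_def c_def nth_append)
  have nth2: "I ! (c + j) = I2 ! j" for j by (simp add: I_def c_def nth_append)
  have aa1: "k < c \<Longrightarrow> aa I k = aa I1 k" for k by (simp add: aa_def nth1)
  have aa2: "aa I c = nn (last I1) + nn (hd I2)"
  proof -
    have "I ! (c - 1) = last I1" using nth1[of "c - 1"] c1 ne1 by (simp add: last_conv_nth c_def)
    moreover have "I ! c = hd I2" using nth2[of 0] ne2 by (simp add: hd_conv_nth)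
    ultimately show ?thesis by (simp add: aa_def)
  qed
  have aa3: "1 \<le> j \<Longrightarrow> aa I (c + j) = aa I2 j" for j
  proof -
    assume j: "1 \<le> j"
    have "c + j - 1 = c + (j - 1)" using j by simp
    then show ?thesis using nth2 by (simp add: aa_def)
  qed
  have pre1: "k \<le> c \<Longrightarrow> prefix_data I k = prefix_data I1 k" for k
    by (simp add: prefix_data_take I_def c_def)
  have pre2: "j \<le> r2 \<Longrightarrow> prefix_data I (c + j) = addd X (prefix_data I2 j)" for j
  proof -
    assume j: "j \<le> r2"
    have "take (c + j) I = I1 @ take j I2" by (simp add: I_def c_def)
    then show ?thesis using j r X by (simp add: prefix_data_take lsum_append r2_def)
  qed
  have preX: "prefix_data I c = X" using pre1[of c] X by (simp add: prefix_data_take c_def)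
  have lfc: "lf S m \<alpha> nu X = e - 1" using lf_X(1)[OF e] .
  have Mmix_split: "Mmix I nu c = Mexp S m \<alpha> I1 nu + int (nn (last I1) + nn (hd I2)) * (e - 1)
       + e * int (\<Sum>j\<in>{1..<r2}. aa I2 j) + Mlf I2 nu"
  proof -
    define g where "g = (\<lambda>k. int (aa I k) * (if k < c then fl S m \<alpha> nu (prefix_data I k) else lf S m \<alpha> nu (prefix_data I k)))"
    have "Mmix I nu c = sum g {1..<c} + g c + (\<Sum>j\<in>{1..<r2}. g (c + j))"
      unfolding Mmix_def g_def[symmetric] using split_sum3[OF c1 cr, of g] r by simp
    also have "g c = int (aa I c) * lf S m \<alpha> nu (prefix_data I c)" by (simp add: g_def)
    also have "(\<Sum>j\<in>{1..<r2}. g (c + j)) = (\<Sum>j\<in>{1..<r2}. int (aa I (c + j)) * lf S m \<alpha> nu (prefix_data I (c + j)))"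
      by (simp add: g_def)
    also have "sum g {1..<c} = (\<Sum>k\<in>{1..<c}. int (aa I k) * (if k < c then fl S m \<alpha> nu (prefix_data I k) else lf S m \<alpha> nu (prefix_data I k)))"
      by (simp add: g_def)
    finally have "Mmix I nu c = (\<Sum>k\<in>{1..<c}. int (aa I k) * (if k < c then fl S m \<alpha> nu (prefix_data I k) else lf S m \<alpha> nu (prefix_data I k)))
       + int (aa I c) * lf S m \<alpha> nu (prefix_data I c)
       + (\<Sum>j\<in>{1..<r2}. int (aa I (c + j)) * lf S m \<alpha> nu (prefix_data I (c + j)))" .
    also have "(\<Sum>k\<in>{1..<c}. int (aa I k) * (if k < c then fl S m \<alpha> nu (prefix_data I k) else lf S m \<alpha> nu (prefix_data I k)))
        = Mexp S m \<alpha> I1 nu"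
      unfolding Mexp_fl c_def[symmetric] by (rule sum.cong) (auto simp: aa1 pre1)
    also have "(\<Sum>j\<in>{1..<r2}. int (aa I (c + j)) * lf S m \<alpha> nu (prefix_data I (c + j)))
        = (\<Sum>j\<in>{1..<r2}. int (aa I2 j) * (e + lf S m \<alpha> nu (prefix_data I2 j)))"
      by (rule sum.cong) (auto simp: aa3 pre2 lf_X(2)[OF e])
    also have "\<dots> = e * int (\<Sum>j\<in>{1..<r2}. aa I2 j) + Mlf I2 nu"
      by (simp add: Mlf_def r2_def sum.distrib algebra_simps sum_distrib_left of_nat_sum)
    finally show ?thesis using aa2 preX lfc by simp
  qed
  have A2: "int (\<Sum>j\<in>{1..<r2}. aa I2 j) = 2 * int (nn R2) - int (nn (hd I2)) - int (nn (last I2))"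
    using aa_sum[OF ne2] by (simp add: r2_def R2_def)
  have sig: "sigma S m I = sigma S m I1 + sigma S m I2 + sig2 S m X R2"
    by (simp add: I_def sigma_append X R2_def)
  have hdI: "hd I = hd I1" and lastI: "last I = last I2" using ne1 ne2 by (simp_all add: I_def)
  have expo: "M'exp S m R I d + Mmix I nu c =
      cross R d X e + (M'exp S m X I1 e + Mexp S m \<alpha> I1 nu) + (M'exp S m R2 I2 (d - e) + Mlf I2 nu)"
    unfolding Mmix_split A2 M'exp_def cross_def dRX sig hdI lastI nR
    by (simp add: algebra_simps)
  have Pad: "(\<Prod>k\<in>{1..<length I}-{c}. inverse (fls_X ^ aa I k - 1 :: rat fls)) = Padj I1 * Padj I2"
  proof -
    have "(\<Prod>k\<in>{1..<length I}-{c}. inverse (fls_X ^ aa I k - 1 :: rat fls)) =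
       (\<Prod>k\<in>{1..<c}. inverse (fls_X ^ aa I k - 1)) * (\<Prod>j\<in>{1..<r2}. inverse (fls_X ^ aa I (c + j) - 1))"
      using split_prod_remove[OF c1 cr] r by simp
    also have "(\<Prod>k\<in>{1..<c}. inverse (fls_X ^ aa I k - 1 :: rat fls)) = Padj I1"
      unfolding Padj_def c_def[symmetric] by (rule prod.cong) (auto simp: aa1)
    also have "(\<Prod>j\<in>{1..<r2}. inverse (fls_X ^ aa I (c + j) - 1 :: rat fls)) = Padj I2"
      unfolding Padj_def r2_def[symmetric] by (rule prod.cong) (auto simp: aa3)
    finally show ?thesis .
  qed
  have "jt Q R d nu I c = fls_X_intpow (cross R d X e + (M'exp S m X I1 e + Mexp S m \<alpha> I1 nu) + (M'exp S m R2 I2 (d - e) + Mlf I2 nu))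
      * (Padj I1 * Padj I2) * (PQ Q I1 * PQ Q I2)"
    unfolding jt_def expo Pad by (simp add: I_def PQ_append)
  also have "\<dots> = fls_X_intpow (cross R d X e) * Gt Q X e nu I1 * Glf Q R2 (d - e) nu I2"
    unfolding Gt_def Glf_def
    by (simp only: fls_X_intpow_times_fls_X_intpow[symmetric] ac_simps)
  finally show ?thesis by (simp add: I_def c_def R2_def)
qed

end

lemma sum_Sigma_alt: "finite A \<Longrightarrow> \<forall>x\<in>A. finite (B x) \<Longrightarrow> sum f (Sigma A B) = (\<Sum>x\<in>A. \<Sum>y\<in>B x. f (x,y))"
proof -
  assume a: "finite A" "\<forall>x\<in>A. finite (B x)"
  have "(\<Sum>x\<in>A. \<Sum>y\<in>B x. f (x,y)) = sum (\<lambda>(x,y). f (x,y)) (Sigma A B)"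
    using a by (rule sum.Sigma)
  then show ?thesis by (simp add: case_prod_eta)
qed

context SM begin

lemma Kset_e: "(X, e) \<in> Kset R nu \<Longrightarrow> real_of_int e = real (nn X) * nu - al X"
  using mu_mult[OF subd_dat, of X R e] by (auto simp: Kset_def)

lemma Parts_iff: "I \<in> Parts R \<longleftrightarrow> I \<noteq> [] \<and> (\<forall>X\<in>set I. dat X) \<and> R = lsum I"
  by (simp add: Parts_def part_iff)

lemma S_jump:
  assumes datR: "dat R"
  shows "Slam S m \<alpha> Q R d nu - Slm Q R d nu =
    (\<Sum>(X,e)\<in>Kset R nu. fls_X_intpow (cross R d X e) * Slam S m \<alpha> Q X e nu * Slm Q (diffd R X) (d - e) nu)"
proof -
  define Pc where "Pc = Sigma (Parts R) (\<lambda>I. {c\<in>{1..<length I}. intg nu (prefix_data I c)})"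
  define H where "H = Sigma (Kset R nu) (\<lambda>(X,e). Parts X \<times> Parts (diffd R X))"
  define \<psi> :: "(('p data \<times> int) \<times> ('p data list \<times> 'p data list)) \<Rightarrow> 'p data list \<times> nat"
    where "\<psi> = (\<lambda>((X,e),(I1,I2)). (I1 @ I2, length I1))"
  have "Slam S m \<alpha> Q R d nu - Slm Q R d nu = (\<Sum>I\<in>Parts R. Gt Q R d nu I - Glf Q R d nu I)"
    by (simp add: Slam_eq Slm_def sum_subtractf)
  also have "\<dots> = (\<Sum>I\<in>Parts R. \<Sum>c\<in>{c\<in>{1..<length I}. intg nu (prefix_data I c)}. jt Q R d nu I c)"
  proof (rule sum.cong[OF refl])
    fix I assume I: "I \<in> Parts R"
    then have "\<forall>X\<in>set I. dat X" "I \<noteq> []" by (auto simp: Parts_iff)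
    then show "Gt Q R d nu I - Glf Q R d nu I = (\<Sum>c\<in>{c\<in>{1..<length I}. intg nu (prefix_data I c)}. jt Q R d nu I c)"
      unfolding sum.inter_filter[OF finite_atLeastLessThan] by (intro J1)
  qed
  also have "\<dots> = (\<Sum>p\<in>Pc. (\<lambda>(I,c). jt Q R d nu I c) p)"
    unfolding Pc_def by (subst sum.Sigma) (auto simp: finite_Parts)
  also have "Pc = \<psi> ` H"
  proof (intro equalityI subsetI)
    fix p assume p: "p \<in> Pc"
    then obtain I c where pe: "p = (I, c)" and I: "I \<in> Parts R" and c: "1 \<le> c" "c < length I"
      and ig: "intg nu (prefix_data I c)" by (auto simp: Pc_def)
    define I1 where "I1 = take c I"
    define I2 where "I2 = drop c I"
    define X where "X = lsum I1"
    define e where "e = fl S m \<alpha> nu X"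
    have Iprops: "I \<noteq> []" "\<forall>X\<in>set I. dat X" "R = lsum I" using I by (auto simp: Parts_iff)
    have ne1: "I1 \<noteq> []" using c Iprops by (simp add: I1_def)
    have ne2: "I2 \<noteq> []" using c by (simp add: I2_def)
    have dat1: "\<forall>Y\<in>set I1. dat Y" using Iprops by (simp add: I1_def) (meson in_set_takeD)
    have dat2: "\<forall>Y\<in>set I2. dat Y" using Iprops by (simp add: I2_def) (meson in_set_dropD)
    have RX: "R = addd X (lsum I2)" using Iprops by (simp add: X_def I1_def I2_def flip: lsum_append)
    have preX: "prefix_data I c = X" using c by (simp add: prefix_data_take X_def I1_def)
    have datX: "dat X" using dat_lsum[OF ne1 dat1] by (simp add: X_def)
    have XR: "X \<in> subd R" using datX RX by (simp add: subd_def addd_def)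
    have dRX: "diffd R X = lsum I2" using RX by simp
    have ee: "real_of_int e = real (nn X) * nu - al X" using ig preX by (simp add: intg_def e_def)
    have "real (nn X) * mu X e = real (nn X) * nu" using mu_mult[OF datX, of e] ee by simp
    then have mue: "mu X e = nu" using dat_pos[OF datX] by simp
    have K: "(X, e) \<in> Kset R nu" using XR mue dRX dat_lsum[OF ne2 dat2] by (simp add: Kset_def)
    have "(I1, I2) \<in> Parts X \<times> Parts (diffd R X)"
      using ne1 ne2 dat1 dat2 dRX by (simp add: Parts_iff X_def)
    then have "((X, e), (I1, I2)) \<in> H" using K by (simp add: H_def)
    moreover have "p = \<psi> ((X, e), (I1, I2))" using pe c by (simp add: \<psi>_def I1_def I2_def)
    ultimately show "p \<in> \<psi> ` H" by blast
  next
    fix p assume "p \<in> \<psi> ` H"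
    then obtain X e I1 I2 where pe: "p = (I1 @ I2, length I1)" and K: "(X, e) \<in> Kset R nu"
      and I1: "I1 \<in> Parts X" and I2: "I2 \<in> Parts (diffd R X)" by (auto simp: H_def \<psi>_def)
    have XR: "X \<in> subd R" using K by (simp add: Kset_def)
    have RR: "addd X (diffd R X) = R" using XR by (intro addd_diffd) (auto simp: subd_def)
    have p1: "I1 \<noteq> []" "\<forall>Y\<in>set I1. dat Y" "X = lsum I1" using I1 by (auto simp: Parts_iff)
    have p2: "I2 \<noteq> []" "\<forall>Y\<in>set I2. dat Y" "diffd R X = lsum I2" using I2 by (auto simp: Parts_iff)
    have "I1 @ I2 \<in> Parts R" using p1 p2 RR by (auto simp: Parts_iff lsum_append)
    moreover have "length I1 \<in> {1..<length (I1 @ I2)}" using p1 p2 by (simp add: Suc_le_eq)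
    moreover have "intg nu (prefix_data (I1 @ I2) (length I1))"
    proof -
      have "prefix_data (I1 @ I2) (length I1) = X" using p1 by (simp add: prefix_data_take)
      moreover have "fl S m \<alpha> nu X = e" using Kset_e[OF K] unfolding fl_def by (metis floor_of_int)
      ultimately show ?thesis using Kset_e[OF K] by (simp add: intg_def)
    qed
    ultimately show "p \<in> Pc" using pe by (simp add: Pc_def)
  qed
  also have "inj_on \<psi> H"
  proof (rule inj_onI)
    fix a b assume a: "a \<in> H" and b: "b \<in> H" and ab: "\<psi> a = \<psi> b"
    obtain X e I1 I2 where ae: "a = ((X, e), (I1, I2))" by (metis prod.collapse)
    obtain X' e' I1' I2' where be: "b = ((X', e'), (I1', I2'))" by (metis prod.collapse)
    have l: "I1 = I1'" "I2 = I2'" using ab ae be by (auto simp: \<psi>_def append_eq_append_conv)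
    have "X = lsum I1" "X' = lsum I1'" using a b ae be by (auto simp: H_def Parts_iff)
    then have XX: "X = X'" using l by simp
    have "real_of_int e = real_of_int e'"
      using Kset_e[of X e R nu] Kset_e[of X' e' R nu] a b ae be XX by (auto simp: H_def)
    then show "a = b" using ae be l XX by simp
  qed
  then have "(\<Sum>p\<in>\<psi> ` H. (\<lambda>(I,c). jt Q R d nu I c) p) = (\<Sum>q\<in>H. (\<lambda>(I,c). jt Q R d nu I c) (\<psi> q))"
    by (rule sum.reindex_cong[OF _ refl]) simp
  also have "\<dots> = (\<Sum>p\<in>Kset R nu. \<Sum>q\<in>Parts (fst p) \<times> Parts (diffd R (fst p)). (\<lambda>(I,c). jt Q R d nu I c) (\<psi> (p, q)))"
  proof -
    have "H = Sigma (Kset R nu) (\<lambda>p. Parts (fst p) \<times> Parts (diffd R (fst p)))"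
      unfolding H_def by (rule Sigma_cong[OF refl]) (simp add: split_beta)
    then show ?thesis by (simp only:) (rule sum_Sigma_alt, auto simp: finite_Kset finite_Parts)
  qed
  also have "\<dots> = (\<Sum>(X,e)\<in>Kset R nu. fls_X_intpow (cross R d X e) * Slam S m \<alpha> Q X e nu * Slm Q (diffd R X) (d - e) nu)"
  proof (rule sum.cong[OF refl], clarify)
    fix X e assume K: "(X, e) \<in> Kset R nu"
    have XR: "X \<in> subd R" using K by (simp add: Kset_def)
    have RR: "addd X (diffd R X) = R" using XR by (intro addd_diffd) (auto simp: subd_def)
    have "(\<Sum>q\<in>Parts X \<times> Parts (diffd R X). (\<lambda>(I,c). jt Q R d nu I c) (\<psi> ((X, e), q))) =
          (\<Sum>(I1,I2)\<in>Parts X \<times> Parts (diffd R X). fls_X_intpow (cross R d X e) * (Gt Q X e nu I1 * Glf Q (diffd R X) (d - e) nu I2))"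
    proof (rule sum.cong[OF refl], clarify)
      fix I1 I2 assume I1: "I1 \<in> Parts X" and I2: "I2 \<in> Parts (diffd R X)"
      have p1: "I1 \<noteq> []" "\<forall>Y\<in>set I1. dat Y" "X = lsum I1" using I1 by (auto simp: Parts_iff)
      have p2: "I2 \<noteq> []" "\<forall>Y\<in>set I2. dat Y" "diffd R X = lsum I2" using I2 by (auto simp: Parts_iff)
      have R: "R = lsum (I1 @ I2)" using RR p1 p2 by (simp add: lsum_append)
      show "(\<lambda>(I,c). jt Q R d nu I c) (\<psi> ((X, e), (I1, I2))) = fls_X_intpow (cross R d X e) * (Gt Q X e nu I1 * Glf Q (diffd R X) (d - e) nu I2)"
        using J2[OF p1(1) p2(1) p1(2) p2(2) p1(3) R Kset_e[OF K], of Q d] p2(3) by (simp add: mult.assoc \<psi>_def)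
    qed
    also have "\<dots> = fls_X_intpow (cross R d X e) * (\<Sum>I1\<in>Parts X. \<Sum>I2\<in>Parts (diffd R X). Gt Q X e nu I1 * Glf Q (diffd R X) (d - e) nu I2)"
      by (simp add: sum.cartesian_product[symmetric] sum_distrib_left)
    also have "(\<Sum>I1\<in>Parts X. \<Sum>I2\<in>Parts (diffd R X). Gt Q X e nu I1 * Glf Q (diffd R X) (d - e) nu I2)
        = Slam S m \<alpha> Q X e nu * Slm Q (diffd R X) (d - e) nu"
      by (simp only: Slam_eq Slm_def sum_product)
    finally show "(\<Sum>q\<in>Parts (fst (X, e)) \<times> Parts (diffd R (fst (X, e))). (\<lambda>(I,c). jt Q R d nu I c) (\<psi> ((X, e), q))) =
        fls_X_intpow (cross R d X e) * Slam S m \<alpha> Q X e nu * Slm Q (diffd R X) (d - e) nu"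
      by (simp add: mult.assoc)
  qed
  finally show ?thesis .
qed

end

lemma step_const:
  fixes f :: "real \<Rightarrow> 'a"
  assumes fin: "\<And>a b. finite (C \<inter> {a<..b})"
    and H1: "\<And>a b. l0 \<le> a \<Longrightarrow> a \<le> b \<Longrightarrow> C \<inter> {a<..b} = {} \<Longrightarrow> f b = f a"
    and H2: "\<And>nu. nu \<in> C \<Longrightarrow> l0 < nu \<Longrightarrow> \<exists>\<delta>>0. \<forall>t. 0 < t \<and> t \<le> \<delta> \<longrightarrow> f (nu - t) = f nu"
  shows "l0 \<le> l \<Longrightarrow> f l = f l0"
proof -
  have main: "\<forall>l. card (C \<inter> {l0<..l}) = n \<longrightarrow> l0 \<le> l \<longrightarrow> f l = f l0" for n
  proof (induction n rule: less_induct)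
  case (less n)
  show ?case
  proof (intro allI impI)
  fix l assume cn: "card (C \<inter> {l0<..l}) = n" and l0l: "l0 \<le> l"
  show "f l = f l0"
  proof (cases "C \<inter> {l0<..l} = {}")
    case True
    then show ?thesis using H1[of l0 l] l0l by simp
  next
    case False
    define nu where "nu = Max (C \<inter> {l0<..l})"
    have nuin: "nu \<in> C \<inter> {l0<..l}" using Max_in[OF fin False] nu_def by simp
    have nomore: "C \<inter> {nu<..l} = {}"
    proof (rule ccontr)
      assume "C \<inter> {nu<..l} \<noteq> {}"
      then obtain z where z: "z \<in> C" "nu < z" "z \<le> l" by auto
      then have "z \<in> C \<inter> {l0<..l}" using nuin by auto
      then have "z \<le> nu" using Max_ge[OF fin] nu_def by simp
      then show False using z by simp
    qed
    have fl: "f l = f nu" using H1[of nu l] nuin nomore by auto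
    obtain \<delta> where d: "\<delta> > 0" "\<forall>t. 0 < t \<and> t \<le> \<delta> \<longrightarrow> f (nu - t) = f nu"
      using H2[of nu] nuin by auto
    define t where "t = min \<delta> ((nu - l0) / 2)"
    have th: "t \<le> (nu - l0) / 2" unfolding t_def by (rule min.cobounded2)
    have t: "0 < t" "t \<le> \<delta>" "t < nu - l0" using d nuin th by (auto simp: t_def)
    have fnu: "f nu = f (nu - t)" using d t by simp
    have sub1: "C \<inter> {l0<..nu - t} \<subseteq> C \<inter> {l0<..l}" using nuin t by auto
    have sub2: "nu \<notin> C \<inter> {l0<..nu - t}" using t by auto
    have sub: "C \<inter> {l0<..nu - t} \<subset> C \<inter> {l0<..l}" using sub1 sub2 nuin by blast
    have "card (C \<inter> {l0<..nu - t}) < card (C \<inter> {l0<..l})"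
      by (rule psubset_card_mono[OF fin sub])
    then have "f (nu - t) = f l0" using less.IH cn t nuin by auto
    then show ?thesis using fl fnu by simp
  qed
  qed
  qed
  then show "l0 \<le> l \<Longrightarrow> f l = f l0" by blast
qed

definition small :: "int \<Rightarrow> rat fls \<Rightarrow> bool" where
  "small N f \<longleftrightarrow> (\<forall>k<N. fls_nth f k = 0)"

lemma small_diff: "small N f \<Longrightarrow> small N g \<Longrightarrow> small N (f - g)"
  by (simp add: small_def)

lemma small_sum: "(\<forall>i\<in>I. small N (f i)) \<Longrightarrow> small N (sum f I)"
  by (simp add: small_def fls_nth_sum)

lemma small_all: "(\<And>N. small N f) \<Longrightarrow> f = 0"
proof -
  assume a: "\<And>N. small N f"
  show "f = 0" unfolding fls_eq_iff
  proof
    fix n show "fls_nth f n = fls_nth 0 n" using a[of "n + 1"] by (simp add: small_def)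
  qed
qed

lemma X_small:
  fixes K :: "rat fls" and g :: "nat \<Rightarrow> int"
  assumes big: "\<And>N. eventually (\<lambda>j. N \<le> g j) sequentially"
  shows "eventually (\<lambda>j. small N (fls_X_intpow (g j) * K)) sequentially"
proof (cases "K = 0")
  case True then show ?thesis by (simp add: small_def)
next
  case False
  show ?thesis
  proof (rule eventually_mono[OF big[of "N - fls_subdegree K"]])
    fix j assume gj: "N - fls_subdegree K \<le> g j"
    show "small N (fls_X_intpow (g j) * K)"
      unfolding small_def
    proof (intro allI impI)
      fix k assume "k < N"
      then have "k + - g j < fls_subdegree K" using gj by simp
      then show "fls_nth (fls_X_intpow (g j) * K) k = 0"
        by (simp add: fls_X_intpow_times_conv_shift)
    qed
  qed
qed

lemma tend_small:
  fixes X :: "nat \<Rightarrow> rat fls"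
  assumes "X \<longlonglongrightarrow> L"
  shows "eventually (\<lambda>j. small N (X j - L)) sequentially"
proof -
  have e: "(0::real) < (1/2) ^ nat N" by simp
  have ev: "eventually (\<lambda>j. dist (X j) L < (1/2) ^ nat N) sequentially"
    using assms e unfolding tendsto_iff by blast
  show ?thesis
  proof (rule eventually_mono[OF ev])
    fix j assume dj: "dist (X j) L < (1/2) ^ nat N"
    show "small N (X j - L)"
    proof (cases "X j = L")
      case True then show ?thesis by (simp add: small_def)
    next
      case False
      define sd where "sd = fls_subdegree (X j - L)"
      have le1: "(1/2::real) ^ nat N \<le> 1" by (simp add: power_le_one)
      have sd0: "0 \<le> sd"
      proof (rule ccontr)
        assume "\<not> 0 \<le> sd"
        then have "dist (X j) L = 2 ^ nat (- sd)" using False by (simp add: dist_fls_def sd_def)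
        moreover have "(1::real) \<le> 2 ^ nat (- sd)" by simp
        ultimately show False using dj le1 by simp
      qed
      have "dist (X j) L = inverse (2 ^ nat sd)" using False sd0 by (simp add: dist_fls_def sd_def)
      also have "\<dots> = (1/2) ^ nat sd" by (simp add: power_one_over inverse_eq_divide)
      finally have "(1/2::real) ^ nat sd < (1/2) ^ nat N" using dj by simp
      then have "nat N < nat sd" by (simp add: power_strict_decreasing_iff)
      then have Nsd: "N \<le> sd" using sd0 by linarith
      show ?thesis unfolding small_def
      proof (intro allI impI)
        fix k assume "k < N"
        then have "k < fls_subdegree (X j - L)" using Nsd sd_def by simp
        then show "fls_nth (X j - L) k = 0" by (rule fls_eq0_below_subdegree)
      qed
    qed
  qed
qed

context SM begin

lemma pre_subd:
  assumes "I \<in> Parts R" "1 \<le> k" "k \<le> length I"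
  shows "prefix_data I k \<in> subd R"
proof -
  have p: "I \<noteq> []" "\<forall>X\<in>set I. dat X" "R = lsum I" using assms(1) by (auto simp: Parts_iff)
  have ne: "take k I \<noteq> []" using assms p by (simp add: Suc_le_eq)
  have dt: "\<forall>X\<in>set (take k I). dat X" using p by (meson in_set_takeD)
  have "R = addd (lsum (take k I)) (lsum (drop k I))" using p by (simp flip: lsum_append)
  then have "\<forall>P i. lsum (take k I) P i \<le> R P i" by (simp add: addd_def)
  then show ?thesis using dat_lsum[OF ne dt] assms(3) by (simp add: subd_def prefix_data_take)
qed

lemma fl_const:
  assumes X: "X \<in> subd R" and ab: "a \<le> b" and C: "crit R \<inter> {a<..b} = {}"
  shows "fl S m \<alpha> b X = fl S m \<alpha> a X"
proof (rule ccontr)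
  assume ne: "fl S m \<alpha> b X \<noteq> fl S m \<alpha> a X"
  have np: "0 < real (nn X)" using dat_pos[OF subd_dat[OF X]] by simp
  have "real (nn X) * a - al X \<le> real (nn X) * b - al X" using ab np by (simp add: mult_left_mono)
  then have "fl S m \<alpha> a X \<le> fl S m \<alpha> b X" unfolding fl_def by (rule floor_mono)
  then have lt: "fl S m \<alpha> a X < fl S m \<alpha> b X" using ne by simp
  define z where "z = fl S m \<alpha> b X"
  have z1: "real_of_int z \<le> real (nn X) * b - al X" unfolding z_def fl_def by simp
  have "fl S m \<alpha> a X + 1 \<le> z" using lt z_def by simp
  then have z2: "real (nn X) * a - al X < real_of_int z"
    unfolding fl_def by (metis floor_less_iff le_floor_iff not_less zle_add1_eq_le)
  have "a < mu X z" using z2 np by (simp add: slope_def pos_less_divide_eq mult.commute)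
  moreover have "mu X z \<le> b" using z1 np by (simp add: slope_def pos_divide_le_eq mult.commute)
  moreover have "mu X z \<in> crit R" using X by (auto simp: crit_def)
  ultimately show False using C by auto
qed

lemma Slam_const:
  assumes ab: "a \<le> b" and C: "crit R \<inter> {a<..b} = {}"
  shows "Slam S m \<alpha> Q R d b = Slam S m \<alpha> Q R d a"
  unfolding Slam_eq
proof (rule sum.cong[OF refl])
  fix I assume I: "I \<in> Parts R"
  have "Mexp S m \<alpha> I b = Mexp S m \<alpha> I a"
    unfolding Mexp_fl by (rule sum.cong[OF refl]) (simp add: fl_const[OF pre_subd[OF I] ab C])
  then show "Gt Q R d b I = Gt Q R d a I" by (simp add: Gt_def)
qed

lemma Slam_left:
  assumes del: "delta_ok R nu \<delta>" and t: "0 < t" "t \<le> \<delta>" and R': "R' \<in> subd R"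
  shows "Slam S m \<alpha> Q R' d (nu - t) = Slm Q R' d nu"
  unfolding Slam_eq Slm_def
proof (rule sum.cong[OF refl])
  fix I assume I: "I \<in> Parts R'"
  have "Mexp S m \<alpha> I (nu - t) = Mlf I nu"
    unfolding Mexp_fl Mlf_def
  proof (rule sum.cong[OF refl])
    fix k assume k: "k \<in> {1..<length I}"
    have "prefix_data I k \<in> subd R" using pre_subd[OF I, of k] k subd_trans[OF _ R'] by auto
    then show "int (aa I k) * fl S m \<alpha> (nu - t) (prefix_data I k) = int (aa I k) * lf S m \<alpha> nu (prefix_data I k)"
      using del t unfolding delta_ok_def by auto
  qed
  then show "Gt Q R' d (nu - t) I = Glf Q R' d nu I" by (simp add: Gt_def Glf_def)
qed

lemma Gt_single: "dat R \<Longrightarrow> Gt Q R d lam [R] = Q R"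
  by (simp add: Gt_def M'exp_def Mexp_fl Padj_def PQ_def)

lemma Gt_small:
  assumes I: "I \<in> Parts R" and l2: "2 \<le> length I"
  shows "eventually (\<lambda>j. small N (Gt Q R d (real j) I)) sequentially"
proof -
  define A where "A = (\<Sum>X\<in>subd R. \<bar>al X\<bar>)"
  define B where "B = \<lceil>A\<rceil>"
  define SA where "SA = (\<Sum>k\<in>{1..<length I}. int (aa I k))"
  define M' where "M' = M'exp S m R I d"
  have datI: "\<forall>X\<in>set I. dat X" using I by (simp add: Parts_iff)
  have SA1: "1 \<le> SA"
  proof -
    have "int (aa I 1) \<le> SA" unfolding SA_def by (rule member_le_sum) (use l2 in auto)
    moreover have "0 < aa I 1" using aa_pos[OF datI, of 1] l2 by simp
    ultimately show ?thesis by simp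
  qed
  have lowfl: "int j - B \<le> fl S m \<alpha> (real j) (prefix_data I k)" if k: "k \<in> {1..<length I}" for j k
  proof -
    define X where "X = prefix_data I k"
    have X: "X \<in> subd R" using pre_subd[OF I, of k] k by (simp add: X_def)
    have "\<bar>al X\<bar> \<le> A" unfolding A_def by (rule member_le_sum) (use X finite_subd in auto)
    moreover have "1 \<le> nn X" using dat_pos[OF subd_dat[OF X]] by simp
    then have "real j \<le> real (nn X) * real j" by (simp add: mult_le_cancel_right1)
    ultimately have "real j - A \<le> real (nn X) * real j - al X" by linarith
    then have "\<lfloor>real j - A\<rfloor> \<le> fl S m \<alpha> (real j) X" unfolding fl_def by (rule floor_mono)
    moreover have "int j - B \<le> \<lfloor>real j - A\<rfloor>" unfolding B_def
      by (simp add: le_floor_iff)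
    ultimately show ?thesis by (simp add: X_def)
  qed
  have lowM: "int j - SA * B \<le> Mexp S m \<alpha> I (real j)" for j
  proof -
    have "(\<Sum>k\<in>{1..<length I}. int (aa I k) * (int j - B)) \<le> Mexp S m \<alpha> I (real j)"
      unfolding Mexp_fl by (rule sum_mono) (simp add: lowfl mult_left_mono)
    moreover have "(\<Sum>k\<in>{1..<length I}. int (aa I k) * (int j - B)) = SA * (int j - B)"
      by (simp add: SA_def sum_distrib_right)
    moreover have "int j \<le> SA * int j" using SA1 by (simp add: mult_le_cancel_right1)
    ultimately show ?thesis by (simp add: algebra_simps)
  qed
  have "eventually (\<lambda>j. small N (fls_X_intpow (M' + Mexp S m \<alpha> I (real j)) * (Padj I * PQ Q I))) sequentially"
  proof (rule X_small)
    fix N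
    show "eventually (\<lambda>j. N \<le> M' + Mexp S m \<alpha> I (real j)) sequentially"
    proof (rule eventually_mono[OF eventually_ge_at_top[of "nat (N - M' + SA * B)"]])
      fix j assume "nat (N - M' + SA * B) \<le> j"
      then have "N - M' + SA * B \<le> int j" by linarith
      then show "N \<le> M' + Mexp S m \<alpha> I (real j)" using lowM[of j] by linarith
    qed
  qed
  then show ?thesis by (simp add: Gt_def M'_def mult.assoc)
qed

lemma S_small:
  assumes datR: "dat R"
  shows "eventually (\<lambda>j. small N (Slam S m \<alpha> Q R d (real j) - Q R)) sequentially"
proof -
  have RP: "[R] \<in> Parts R" using datR by (simp add: Parts_iff)
  have split: "Slam S m \<alpha> Q R d (real j) - Q R = (\<Sum>I\<in>Parts R - {[R]}. Gt Q R d (real j) I)" for j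
    unfolding Slam_eq using sum.remove[OF finite_Parts RP, of "Gt Q R d (real j)"] Gt_single[OF datR] by simp
  have l2: "2 \<le> length I" if I: "I \<in> Parts R - {[R]}" for I
  proof (rule ccontr)
    assume "\<not> 2 \<le> length I"
    moreover have "I \<noteq> []" using I by (simp add: Parts_iff)
    moreover have "length I \<noteq> 0" using \<open>I \<noteq> []\<close> by simp
    ultimately have "length I = 1" by arith
    then obtain X where "I = [X]" by (metis One_nat_def length_0_conv length_Suc_conv)
    then show False using I by (auto simp: Parts_iff)
  qed
  have "eventually (\<lambda>j. \<forall>I\<in>Parts R - {[R]}. small N (Gt Q R d (real j) I)) sequentially"
    using finite_Parts Gt_small l2 by (intro eventually_ball_finite) auto
  then show ?thesis unfolding split by (rule eventually_mono) (rule small_sum)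
qed

lemma tend_A:
  assumes hs: "(TT Qd has_sum QR) (Dset S m \<alpha> R d)" and datR: "dat R"
  shows "(\<lambda>j. sum (TT Qd) (Fset R d (real j))) \<longlonglongrightarrow> QR"
proof -
  have lim: "filterlim (\<lambda>j. Fset R d (real j)) (finite_subsets_at_top (Dset S m \<alpha> R d)) sequentially"
    unfolding filterlim_finite_subsets_at_top
  proof (intro allI impI)
    fix X assume X: "finite X \<and> X \<subseteq> Dset S m \<alpha> R d"
    define B where "B = (\<Sum>p\<in>X. \<bar>mu (hd (fst p)) (hd (snd p))\<bar>)"
    show "eventually (\<lambda>j. finite (Fset R d (real j)) \<and> X \<subseteq> Fset R d (real j) \<and> Fset R d (real j) \<subseteq> Dset S m \<alpha> R d) sequentially"
    proof (rule eventually_mono[OF eventually_ge_at_top[of "nat \<lceil>B\<rceil>"]])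
      fix j assume j: "nat \<lceil>B\<rceil> \<le> j"
      have "B \<le> real j" using j by linarith
      have "X \<subseteq> Fset R d (real j)"
      proof
        fix p assume p: "p \<in> X"
        obtain Is ds where pe: "p = (Is, ds)" by fastforce
        have "\<bar>mu (hd Is) (hd ds)\<bar> \<le> B" unfolding B_def using X p pe
          by (metis (no_types, lifting) abs_ge_zero fst_conv member_le_sum snd_conv)
        then have "mu (hd Is) (hd ds) \<le> real j" using \<open>B \<le> real j\<close> by linarith
        then show "p \<in> Fset R d (real j)" using X p pe by (auto simp: Fset_def)
      qed
      then show "finite (Fset R d (real j)) \<and> X \<subseteq> Fset R d (real j) \<and> Fset R d (real j) \<subseteq> Dset S m \<alpha> R d"
        using finite_Fset[OF datR] by (auto simp: Fset_def)
    qed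
  qed
  have "(sum (TT Qd) \<longlongrightarrow> QR) (finite_subsets_at_top (Dset S m \<alpha> R d))" using hs by (simp add: has_sum_def)
  then show ?thesis using filterlim_compose[OF _ lim] by blast
qed

end

locale SM2 = SM S m \<alpha> for S :: "'p set" and m :: "'p \<Rightarrow> nat" and \<alpha> :: "'p \<Rightarrow> nat \<Rightarrow> real" +
  fixes Qd :: "'p data \<Rightarrow> int \<Rightarrow> rat fls" and Q :: "'p data \<Rightarrow> rat fls"
  assumes hyp: "\<forall>R' d'. is_data S m R' \<longrightarrow>
               ((\<lambda>(Is, ds). qterm S m Qd Is ds) has_sum Q R') (Dset S m \<alpha> R' d')"
begin

lemma TT_eq: "(\<lambda>(Is, ds). qterm S m Qd Is ds) = TT Qd"
  by (auto simp: TT_def fun_eq_iff)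

lemma hyp': "dat R \<Longrightarrow> (TT Qd has_sum Q R) (Dset S m \<alpha> R d)"
  using hyp TT_eq by metis

lemma mu_diff_lt:
  assumes XR: "X \<in> subd R" and dR: "dat (diffd R X)" and datR: "dat R"
    and lt: "mu R d < nu" and mue: "mu X e = nu"
  shows "mu (diffd R X) (d - e) < nu"
proof -
  define R' where "R' = diffd R X"
  have datX: "dat X" using XR subd_dat by blast
  have RR: "R = addd X R'" using XR unfolding R'_def by (intro addd_diffd[symmetric]) (auto simp: subd_def)
  have n: "real (nn R) = real (nn X) + real (nn R')" using RR nn_add by simp
  have "real (nn R) * mu R d = real_of_int d + al R" using mu_mult[OF datR] .
  also have "\<dots> = (real_of_int e + al X) + (real_of_int (d - e) + al R')" using RR al_add by simp
  also have "\<dots> = real (nn X) * nu + real (nn R') * mu R' (d - e)"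
    using mu_mult[OF datX, of e] mu_mult[OF dR[folded R'_def], of "d - e"] mue by simp
  finally have eq: "real (nn R) * mu R d = real (nn X) * nu + real (nn R') * mu R' (d - e)" .
  have "real (nn R) * mu R d < real (nn R) * nu" using lt dat_pos[OF datR] by simp
  then have "real (nn R') * mu R' (d - e) < real (nn R') * nu" using eq n by (simp add: algebra_simps)
  then show ?thesis using dat_pos[OF dR] R'_def by (simp add: mult_less_cancel_left)
qed

lemma main_thm: "dat R \<Longrightarrow> mu R d \<le> lam \<Longrightarrow> sum (TT Qd) (Fset R d lam) = Slam S m \<alpha> Q R d lam"
proof -
  have "\<forall>R d lam. nn R = n \<longrightarrow> dat R \<longrightarrow> mu R d \<le> lam \<longrightarrow> sum (TT Qd) (Fset R d lam) = Slam S m \<alpha> Q R d lam" for n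
  proof (induction n rule: less_induct)
    case (less n)
    have IH: "sum (TT Qd) (Fset R' d' lam') = Slam S m \<alpha> Q R' d' lam'"
      if "nn R' < n" "dat R'" "mu R' d' \<le> lam'" for R' d' lam'
      using less.IH that by blast
    show ?case
    proof (intro allI impI)
      fix R d lam assume nR: "nn R = n" and datR: "dat R" and le: "mu R d \<le> lam"
      define D where "D = (\<lambda>l. sum (TT Qd) (Fset R d l) - Slam S m \<alpha> Q R d l)"
      have const: "\<And>l. mu R d \<le> l \<Longrightarrow> D l = D (mu R d)"
      proof (rule step_const[of "crit R" "mu R d" D])
        show "finite (crit R \<inter> {a<..b})" for a b by (rule finite_crit)
      next
        fix a b assume "mu R d \<le> a" "a \<le> b" "crit R \<inter> {a<..b} = {}"
        then show "D b = D a" unfolding D_def using Fset_const Slam_const by simp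
      next
        fix nu assume nuC: "nu \<in> crit R" and lt: "mu R d < nu"
        obtain \<delta> where del: "delta_ok R nu \<delta>" using delta_exists[OF datR] by blast
        have "D (nu - t) = D nu" if t: "0 < t" "t \<le> \<delta>" for t
        proof -
          have Aj: "sum (TT Qd) (Fset R d nu) - sum (TT Qd) (Fset R d (nu - t)) =
             (\<Sum>(X,e)\<in>Kset R nu. fls_X_intpow (cross R d X e) * Qd X e * sum (TT Qd) (Fset (diffd R X) (d - e) (nu - t)))"
            by (rule A_jump[OF datR lt del t])
          have Sj: "Slam S m \<alpha> Q R d nu - Slam S m \<alpha> Q R d (nu - t) =
             (\<Sum>(X,e)\<in>Kset R nu. fls_X_intpow (cross R d X e) * Slam S m \<alpha> Q X e nu * Slm Q (diffd R X) (d - e) nu)"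
            using S_jump[OF datR, of Q d nu] Slam_left[OF del t R_subd[OF datR], of Q d] by simp
          have "(\<Sum>(X,e)\<in>Kset R nu. fls_X_intpow (cross R d X e) * Qd X e * sum (TT Qd) (Fset (diffd R X) (d - e) (nu - t)))
              = (\<Sum>(X,e)\<in>Kset R nu. fls_X_intpow (cross R d X e) * Slam S m \<alpha> Q X e nu * Slm Q (diffd R X) (d - e) nu)"
          proof (rule sum.cong[OF refl], clarify)
            fix X e assume K: "(X, e) \<in> Kset R nu"
            have XR: "X \<in> subd R" and dR: "dat (diffd R X)" and mue: "mu X e = nu" using K by (auto simp: Kset_def)
            have datX: "dat X" using XR subd_dat by blast
            have RR: "R = addd X (diffd R X)" using XR by (intro addd_diffd[symmetric]) (auto simp: subd_def)
            have nsum: "nn R = nn X + nn (diffd R X)" using RR nn_add by metis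
            have ltX: "nn X < n" using nsum nR dat_pos[OF dR] by simp
            have ltR': "nn (diffd R X) < n" using nsum nR dat_pos[OF datX] by simp
            have q: "Qd X e = Slam S m \<alpha> Q X e nu"
            proof -
              have "sum (TT Qd) (Fset X e (mu X e)) = Slam S m \<alpha> Q X e (mu X e)" by (rule IH[OF ltX datX]) simp
              then show ?thesis using Fset_base[OF datX, of e] mue by (simp add: TT_def qterm_single)
            qed
            have R'sub: "diffd R X \<in> subd R" using dR by (simp add: subd_def diffd_def)
            have mu': "mu (diffd R X) (d - e) \<le> nu - t"
              using below_crit[OF del R'sub mu_diff_lt[OF XR dR datR lt mue] t] .
            have s: "sum (TT Qd) (Fset (diffd R X) (d - e) (nu - t)) = Slm Q (diffd R X) (d - e) nu"
              using IH[OF ltR' dR mu'] Slam_left[OF del t R'sub, of Q "d - e"] by simp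
            show "fls_X_intpow (cross R d X e) * Qd X e * sum (TT Qd) (Fset (diffd R X) (d - e) (nu - t)) =
                fls_X_intpow (cross R d X e) * Slam S m \<alpha> Q X e nu * Slm Q (diffd R X) (d - e) nu"
              using q s by simp
          qed
          then have "sum (TT Qd) (Fset R d nu) - sum (TT Qd) (Fset R d (nu - t)) =
              Slam S m \<alpha> Q R d nu - Slam S m \<alpha> Q R d (nu - t)" using Aj Sj by simp
          then show ?thesis unfolding D_def by (simp add: algebra_simps)
        qed
        then show "\<exists>\<delta>>0. \<forall>t. 0 < t \<and> t \<le> \<delta> \<longrightarrow> D (nu - t) = D nu"
          using del unfolding delta_ok_def by blast
      qed
      have D0: "D (mu R d) = 0"
      proof (rule small_all)
        fix N
        have e1: "eventually (\<lambda>j. small N (sum (TT Qd) (Fset R d (real j)) - Q R)) sequentially"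
          by (rule tend_small[OF tend_A[OF hyp'[OF datR] datR]])
        have e2: "eventually (\<lambda>j. small N (Slam S m \<alpha> Q R d (real j) - Q R)) sequentially"
          by (rule S_small[OF datR])
        have e3: "eventually (\<lambda>j. mu R d \<le> real j) sequentially"
          by (rule eventually_mono[OF eventually_ge_at_top[of "nat \<lceil>mu R d\<rceil>"]]) linarith
        have "eventually (\<lambda>j. small N (sum (TT Qd) (Fset R d (real j)) - Q R) \<and>
             small N (Slam S m \<alpha> Q R d (real j) - Q R) \<and> mu R d \<le> real j) sequentially"
          using e1 e2 e3 by (intro eventually_conj)
        then obtain j where j: "small N (sum (TT Qd) (Fset R d (real j)) - Q R)"
          "small N (Slam S m \<alpha> Q R d (real j) - Q R)" "mu R d \<le> real j"
          unfolding eventually_sequentially by blast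
        have "D (mu R d) = (sum (TT Qd) (Fset R d (real j)) - Q R) - (Slam S m \<alpha> Q R d (real j) - Q R)"
          using const[OF j(3)] by (simp add: D_def)
        then show "small N (D (mu R d))" using small_diff[OF j(1) j(2)] by simp
      qed
      show "sum (TT Qd) (Fset R d lam) = Slam S m \<alpha> Q R d lam"
        using const[OF le] D0 by (simp add: D_def)
    qed
  qed
  then show "dat R \<Longrightarrow> mu R d \<le> lam \<Longrightarrow> sum (TT Qd) (Fset R d lam) = Slam S m \<alpha> Q R d lam" by blast
qed

end

theorem theorem5p6:
  fixes S :: "'p set" and m :: "'p \<Rightarrow> nat" and \<alpha> :: "'p \<Rightarrow> nat \<Rightarrow> real"
    and Qd :: "'p data \<Rightarrow> int \<Rightarrow> rat fls" and Q :: "'p data \<Rightarrow> rat fls"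
    and R :: "'p data" and d :: int and lam :: real
  assumes "finite S" and "S \<noteq> {}"
    and "\<forall>P\<in>S. 1 \<le> m P"
    and "\<forall>P\<in>S. 0 \<le> \<alpha> P 1"
    and "\<forall>P\<in>S. \<forall>i j. 1 \<le> i \<longrightarrow> i < j \<longrightarrow> j \<le> m P \<longrightarrow> \<alpha> P i < \<alpha> P j"
    and "\<forall>P\<in>S. \<alpha> P (m P) < 1"
    and hyp: "\<forall>R' d'. is_data S m R' \<longrightarrow>
               ((\<lambda>(Is, ds). qterm S m Qd Is ds) has_sum Q R') (Dset S m \<alpha> R' d')"
    and "is_data S m R"
    and "(real_of_int d + dalpha S m \<alpha> R) / real (dn S m R) \<le> lam"
  shows "((\<lambda>(Is, ds). qterm S m Qd Is ds) has_sum Slam S m \<alpha> Q R d lam)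
           {(Is, ds) \<in> Dset S m \<alpha> R d. slope S m \<alpha> (hd Is) (hd ds) \<le> lam}"
proof -
  interpret SM2 S m \<alpha> Qd Q
    by unfold_locales (use assms(1,2) hyp in auto)
  have F: "{(Is, ds) \<in> Dset S m \<alpha> R d. slope S m \<alpha> (hd Is) (hd ds) \<le> lam} = Fset R d lam"
    by (simp add: Fset_def)
  have mu: "slope S m \<alpha> R d \<le> lam" using assms(9) by (simp add: slope_def)
  have eq: "sum (TT Qd) (Fset R d lam) = Slam S m \<alpha> Q R d lam"
    by (rule main_thm[OF assms(8) mu])
  show ?thesis unfolding F TT_eq
    by (rule has_sum_finiteI[OF finite_Fset[OF assms(8)] eq[symmetric]])
qed


end
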